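(* Let $k$ be an algebraically closed field, $n\ge1$, $1\le g\le n$, $h:=n+1-g$, and let $K$ and the representations $V_{(p,q)}$ be as in the context. Fix $m\in\mathbb N$. Let $Q_m^\infty$ be the quiver with vertices $(r,s)_\infty$ for $s\in\{0,\dots,h-1\}$ and $0\le r\le h(m+1)-s$, with arrows $\rho_\infty(r,s):(r,s)_\infty\to(r+1,s)_\infty$, and $\pi_\infty(r,s):(r+1,s-1)_\infty\to(r,s)_\infty$ for $1\le s\le h-1$, $\pi_\infty(r,0):(r+1,h-1)_\infty\to(r,0)_\infty$, whenever both endpoints lie in $Q_m^\infty$. Let $F_\infty:kQ_m^\infty\to\operatorname{rep}K$ be the $k$-linear functor defined in the context and $R_m^\infty$ the full subcategory of $\operatorname{rep}K$ with objects $F_\infty X$, $X$ a vertex of $Q_m^\infty$. For $s\in\{0,\dots,h-1\}$ let $s^+=s+1$ if $s<h-1$ and $s^+=0$ if $s=h-1$. Let $\overline{kQ_m^\infty}$ be the quotient of the path category $kQ_m^\infty$ by the ideal generated by (i) $\pi_\infty(r+1,s^+)\circ\rho_\infty(r+1,s)=\rho_\infty(r,s^+)\circ\pi_\infty(r,s^+)$ for all $r,s$ for which all arrows involved lie in $Q_m^\infty$, and (ii) $\pi_\infty(0,s^+)\circ\rho_\infty(0,s)=0$ for all $s\in\{0,\dots,h-1\}$. Then $F_\infty$ induces an isomorphism of $k$-categories $\overline{F_\infty}:\overline{kQ_m^\infty}\to R_m^\infty$.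
   Context: $K$: quiver with vertices $0,\dots,n$ and arrows $\beta_x:x\to x+1$ ($0\le x\le g-1$) and $\alpha_x:x+1\to x$ ($g\le x\le n$), indices modulo $n+1$; $\operatorname{rep}K$ is the category of finite-dimensional representations. For $0\le p\le n$, $q\ge p$: $V_{(p,q)}(x)$ is spanned by the basis vectors $e_i$, $p\le i\le q$, $i\equiv x\pmod{n+1}$; $V_{(p,q)}(\beta_x)(e_i)=e_{i+1}$ if $i<q$, $=0$ if $i=q$; $V_{(p,q)}(\alpha_x)(e_i)=e_{i-1}$ if $i>p$, $=0$ if $i=p$. Composition $\circ$ is written right to left. For integers $a$ and $b>0$, $\mathrm{DIV}(a,b)$ and $\mathrm{MOD}(a,b)$ are the unique integers with $a=\mathrm{DIV}(a,b)\,b+\mathrm{MOD}(a,b)$ and $0\le\mathrm{MOD}(a,b)<b$. Definition of $F_\infty$: put $p_0=0$, $p_s=g+s$ for $1\le s\le h-1$, and $q_{r,s}=g+\mathrm{MOD}(r+s,h)+(n+1)\mathrm{DIV}(r+s,h)$; set $F_\infty(r,s)_\infty=V_{(p_s,q_{r,s})}$. $F_\infty\rho_\infty(r,s):V_{(p_s,q_{r,s})}\to V_{(p_s,q_{r+1,s})}$ is $e_t\mapsto e_t$ for $p_s\le t\le q_{r,s}$. For $1\le s\le h-1$, $F_\infty\pi_\infty(r,s):V_{(p_{s-1},q_{r+1,s-1})}\to V_{(p_s,q_{r,s})}$ is $e_t\mapsto0$ for $p_{s-1}\le t<p_s$ and $e_t\mapsto e_t$ for $p_s\le t\le q_{r+1,s-1}$.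 For $s=0$, $F_\infty\pi_\infty(r,0):V_{(p_{h-1},q_{r+1,h-1})}\to V_{(0,q_{r,0})}$ is $e_t\mapsto 0$ for $p_{h-1}\le t\le n$ and $e_t\mapsto e_{t-(n+1)}$ for $n+1\le t\le q_{r+1,h-1}$. *)

theory Defs
  imports "HOL-Computational_Algebra.Polynomial"
begin

text \<open>A vector of V_(p,q) is a function int => 'k (coefficient of e_i), supported in [p,q].
  A morphism V_(p,q) -> V_(p',q') is encoded by a matrix M :: int => int => 'k, where
  M i is the image of e_i, i.e. M i j is the coefficient of e_j in f(e_i).\<close>

definition up_map :: "int \<Rightarrow> int \<Rightarrow> (int \<Rightarrow> 'k::zero) \<Rightarrow> int \<Rightarrow> 'k" where
  "up_map p q v = (\<lambda>j. if p < j \<and> j \<le> q then v (j - 1) else 0)"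

definition down_map :: "int \<Rightarrow> int \<Rightarrow> (int \<Rightarrow> 'k::zero) \<Rightarrow> int \<Rightarrow> 'k" where
  "down_map p q v = (\<lambda>j. if p \<le> j \<and> j < q then v (j + 1) else 0)"

text \<open>M is a morphism of representations of K from V_(p,q) to V_(p',q'):
  a family of linear maps V(x) -> W(x) (support condition) commuting with all arrows
  beta_x (0 <= x <= g-1) and alpha_x (g <= x <= n).\<close>
definition is_rep_hom :: "nat \<Rightarrow> nat \<Rightarrow> int \<times> int \<Rightarrow> int \<times> int \<Rightarrow> (int \<Rightarrow> int \<Rightarrow> 'k::field) \<Rightarrow> bool" where
  "is_rep_hom n g V W M \<longleftrightarrow>
    (\<forall>i j. M i j \<noteq> 0 \<longrightarrow> fst V \<le> i \<and> i \<le> snd V \<and> fst W \<le> j \<and> j \<le> snd W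
                          \<and> i mod int (n+1) = j mod int (n+1))
  \<and> (\<forall>x\<in>{0..<g}. \<forall>i. fst V \<le> i \<and> i \<le> snd V \<and> i mod int (n+1) = int x \<longrightarrow>
        up_map (fst W) (snd W) (M i) = (if i < snd V then M (i+1) else (\<lambda>_. 0)))
  \<and> (\<forall>x\<in>{g..n}. \<forall>i. fst V \<le> i \<and> i \<le> snd V \<and> i mod int (n+1) = int ((x+1) mod (n+1)) \<longrightarrow>
        down_map (fst W) (snd W) (M i) = (if fst V < i then M (i-1) else (\<lambda>_. 0)))"

definition HomK :: "nat \<Rightarrow> nat \<Rightarrow> int \<times> int \<Rightarrow> int \<times> int \<Rightarrow> (int \<Rightarrow> int \<Rightarrow> 'k::field) set" where
  "HomK n g V W = {M. is_rep_hom n g V W M}"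

definition midentity :: "int \<times> int \<Rightarrow> int \<Rightarrow> int \<Rightarrow> 'k::field" where
  "midentity V = (\<lambda>i j. if i = j \<and> fst V \<le> i \<and> i \<le> snd V then 1 else 0)"

text \<open>Composition: first M : U -> V, then N : V -> W (V = (p,q) is the middle object).\<close>
definition mcomp :: "int \<times> int \<Rightarrow> (int \<Rightarrow> int \<Rightarrow> 'k::field) \<Rightarrow> (int \<Rightarrow> int \<Rightarrow> 'k) \<Rightarrow> int \<Rightarrow> int \<Rightarrow> 'k" where
  "mcomp V M N = (\<lambda>i l. \<Sum>j\<in>{fst V..snd V}. M i j * N j l)"

definition hh :: "nat \<Rightarrow> nat \<Rightarrow> nat" where "hh n g = n + 1 - g"

datatype qarrow = Rho nat nat | Pi nat nat

definition in_Q :: "nat \<Rightarrow> nat \<Rightarrow> nat \<Rightarrow> nat \<times> nat \<Rightarrow> bool" where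
  "in_Q n g m X \<longleftrightarrow> snd X < hh n g \<and> fst X + snd X \<le> hh n g * (m + 1)"

fun qsrc :: "nat \<Rightarrow> nat \<Rightarrow> qarrow \<Rightarrow> nat \<times> nat" where
  "qsrc n g (Rho r s) = (r, s)"
| "qsrc n g (Pi r s) = (r + 1, if s = 0 then hh n g - 1 else s - 1)"

fun qtgt :: "nat \<Rightarrow> nat \<Rightarrow> qarrow \<Rightarrow> nat \<times> nat" where
  "qtgt n g (Rho r s) = (r + 1, s)"
| "qtgt n g (Pi r s) = (r, s)"

definition valid_arrow :: "nat \<Rightarrow> nat \<Rightarrow> nat \<Rightarrow> qarrow \<Rightarrow> bool" where
  "valid_arrow n g m a \<longleftrightarrow> in_Q n g m (qsrc n g a) \<and> in_Q n g m (qtgt n g a)"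

text \<open>Paths listed in traversal order: [a1,...,ak] is the path ak o ... o a1.
  The empty list at X is the trivial path e_X.\<close>
fun is_path :: "nat \<Rightarrow> nat \<Rightarrow> nat \<Rightarrow> nat \<times> nat \<Rightarrow> nat \<times> nat \<Rightarrow> qarrow list \<Rightarrow> bool" where
  "is_path n g m X Y [] \<longleftrightarrow> X = Y \<and> in_Q n g m X"
| "is_path n g m X Y (a # w) \<longleftrightarrow> valid_arrow n g m a \<and> qsrc n g a = X \<and> is_path n g m (qtgt n g a) Y w"

definition kQ :: "nat \<Rightarrow> nat \<Rightarrow> nat \<Rightarrow> nat \<times> nat \<Rightarrow> nat \<times> nat \<Rightarrow> (qarrow list \<Rightarrow> 'k::field) set" where
  "kQ n g m X Y = {c. finite {w. c w \<noteq> 0} \<and> (\<forall>w. c w \<noteq> 0 \<longrightarrow> is_path n g m X Y w)}"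

definition pp :: "nat \<Rightarrow> nat \<Rightarrow> int" where
  "pp g s = (if s = 0 then 0 else int g + int s)"

definition qq :: "nat \<Rightarrow> nat \<Rightarrow> nat \<Rightarrow> nat \<Rightarrow> int" where
  "qq n g r s = int g + int ((r + s) mod hh n g) + int (n + 1) * int ((r + s) div hh n g)"

definition Fobj :: "nat \<Rightarrow> nat \<Rightarrow> nat \<times> nat \<Rightarrow> int \<times> int" where
  "Fobj n g X = (pp g (snd X), qq n g (fst X) (snd X))"

fun Farr :: "nat \<Rightarrow> nat \<Rightarrow> qarrow \<Rightarrow> int \<Rightarrow> int \<Rightarrow> 'k::field" where
  "Farr n g (Rho r s) = (\<lambda>i j. if i = j \<and> pp g s \<le> i \<and> i \<le> qq n g r s then 1 else 0)"
| "Farr n g (Pi r s) =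
     (if s = 0 then
        (\<lambda>i j. if int (n + 1) \<le> i \<and> i \<le> qq n g (r + 1) (hh n g - 1) \<and> j = i - int (n + 1) then 1 else 0)
      else
        (\<lambda>i j. if i = j \<and> pp g s \<le> i \<and> i \<le> qq n g (r + 1) (s - 1) then 1 else 0))"

fun Fpath :: "nat \<Rightarrow> nat \<Rightarrow> nat \<times> nat \<Rightarrow> qarrow list \<Rightarrow> int \<Rightarrow> int \<Rightarrow> 'k::field" where
  "Fpath n g X [] = midentity (Fobj n g X)"
| "Fpath n g X (a # w) = mcomp (Fobj n g (qtgt n g a)) (Farr n g a) (Fpath n g (qtgt n g a) w)"

definition Flin :: "nat \<Rightarrow> nat \<Rightarrow> nat \<times> nat \<Rightarrow> (qarrow list \<Rightarrow> 'k::field) \<Rightarrow> int \<Rightarrow> int \<Rightarrow> 'k" where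
  "Flin n g X c = (\<lambda>i j. \<Sum>w\<in>{w. c w \<noteq> 0}. c w * Fpath n g X w i j)"

definition splus :: "nat \<Rightarrow> nat \<Rightarrow> nat \<Rightarrow> nat" where
  "splus n g s = (if s + 1 < hh n g then s + 1 else 0)"

definition pvec :: "qarrow list \<Rightarrow> qarrow list \<Rightarrow> 'k::field" where
  "pvec w = (\<lambda>w'. if w' = w then 1 else 0)"

text \<open>Generating relations, as triples (source, target, linear combination of paths).\<close>
definition rel_gen :: "nat \<Rightarrow> nat \<Rightarrow> nat \<Rightarrow> ((nat \<times> nat) \<times> (nat \<times> nat) \<times> (qarrow list \<Rightarrow> 'k::field)) set" where
  "rel_gen n g m =
     {((r + 1, s), (r + 1, splus n g s),
        (\<lambda>w. pvec [Rho (r + 1) s, Pi (r + 1) (splus n g s)] w - pvec [Pi r (splus n g s), Rho r (splus n g s)] w))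
      | r s. s < hh n g \<and> valid_arrow n g m (Rho (r + 1) s) \<and> valid_arrow n g m (Pi (r + 1) (splus n g s))
             \<and> valid_arrow n g m (Pi r (splus n g s)) \<and> valid_arrow n g m (Rho r (splus n g s))}
   \<union> {((0, s), (0, splus n g s), pvec [Rho 0 s, Pi 0 (splus n g s)])
      | s. s < hh n g \<and> valid_arrow n g m (Rho 0 s) \<and> valid_arrow n g m (Pi 0 (splus n g s))}"

text \<open>u o rho o v for paths v (first) and u (last).\<close>
definition sandwich :: "qarrow list \<Rightarrow> (qarrow list \<Rightarrow> 'k::field) \<Rightarrow> qarrow list \<Rightarrow> qarrow list \<Rightarrow> 'k" where
  "sandwich v \<rho> u = (\<lambda>w. \<Sum>w'\<in>{w'. \<rho> w' \<noteq> 0 \<and> w = v @ w' @ u}. \<rho> w')"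

inductive in_ideal :: "nat \<Rightarrow> nat \<Rightarrow> nat \<Rightarrow> nat \<times> nat \<Rightarrow> nat \<times> nat \<Rightarrow> (qarrow list \<Rightarrow> 'k::field) \<Rightarrow> bool"
  for n g m X Y where
  zero: "in_ideal n g m X Y (\<lambda>_. 0)"
| gen: "(A, B, \<rho>) \<in> rel_gen n g m \<Longrightarrow> is_path n g m X A v \<Longrightarrow> is_path n g m B Y u
        \<Longrightarrow> in_ideal n g m X Y (sandwich v \<rho> u)"
| add: "in_ideal n g m X Y c \<Longrightarrow> in_ideal n g m X Y d \<Longrightarrow> in_ideal n g m X Y (\<lambda>w. c w + d w)"
| smult: "in_ideal n g m X Y c \<Longrightarrow> in_ideal n g m X Y (\<lambda>w. a * c w)"

end

theory Submission
  imports Defs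
begin


definition QQ :: "nat \<Rightarrow> nat \<Rightarrow> nat \<Rightarrow> int" where
  "QQ n g t = int g + int (t mod hh n g) + int (n+1) * int (t div hh n g)"

definition phi :: "nat \<Rightarrow> nat \<Rightarrow> nat \<Rightarrow> int" where
  "phi n g j = pp g (j mod hh n g) + int (n+1) * int (j div hh n g)"

definition PS :: "int \<Rightarrow> int \<Rightarrow> int \<Rightarrow> int \<Rightarrow> int \<Rightarrow> int \<Rightarrow> 'k::field" where
  "PS N k lo hi = (\<lambda>i j. if j = i - N*k \<and> lo \<le> i \<and> i \<le> hi then 1 else 0)"

lemma qq_QQ: "qq n g r s = QQ n g (r+s)" by (simp add: qq_def QQ_def)

lemma PS_empty: "hi < lo \<Longrightarrow> PS N k lo hi = (\<lambda>_ _. 0)"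
  by (auto simp: PS_def fun_eq_iff)

lemma mcomp_PS:
  "mcomp V (PS N k1 l1 h1) (PS N k2 l2 h2) =
   PS N (k1+k2) (max (max l1 (fst V + N*k1)) (l2 + N*k1)) (min (min h1 (snd V + N*k1)) (h2 + N*k1))"
proof (rule ext, rule ext)
  fix i l
  have "mcomp V (PS N k1 l1 h1) (PS N k2 l2 h2) i l =
     (\<Sum>j\<in>{fst V..snd V}. if j = i - N*k1 then
        (if l1 \<le> i \<and> i \<le> h1 \<and> l = j - N*k2 \<and> l2 \<le> j \<and> j \<le> h2 then 1 else 0) else 0)"
    unfolding mcomp_def PS_def by (intro sum.cong) auto
  also have "\<dots> = (if i - N*k1 \<in> {fst V..snd V} then
        (if l1 \<le> i \<and> i \<le> h1 \<and> l = i - N*k1 - N*k2 \<and> l2 \<le> i - N*k1 \<and> i - N*k1 \<le> h2 then 1 else 0) else 0)"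
    by (subst sum.delta) auto
  also have "\<dots> = PS N (k1+k2) (max (max l1 (fst V + N*k1)) (l2 + N*k1)) (min (min h1 (snd V + N*k1)) (h2 + N*k1)) i l"
    unfolding PS_def by (auto simp: algebra_simps)
  finally show "mcomp V (PS N k1 l1 h1) (PS N k2 l2 h2) i l = PS N (k1+k2) (max (max l1 (fst V + N*k1)) (l2 + N*k1)) (min (min h1 (snd V + N*k1)) (h2 + N*k1)) i l" .
qed

lemma mcomp_assoc:
  "mcomp V A (mcomp W B C) = mcomp W (mcomp V A B) C"
  unfolding mcomp_def
  by (auto simp: fun_eq_iff sum_distrib_left sum_distrib_right mult.assoc intro: sum.swap)

fun pis :: "nat \<Rightarrow> nat \<Rightarrow> nat \<Rightarrow> nat \<Rightarrow> nat \<Rightarrow> qarrow list" where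
  "pis n g r s 0 = []"
| "pis n g r s (Suc b) = Pi (r - 1) (splus n g s) # pis n g (r - 1) (splus n g s) b"

fun rhos :: "nat \<Rightarrow> nat \<Rightarrow> nat \<Rightarrow> qarrow list" where
  "rhos r s 0 = []"
| "rhos r s (Suc a) = Rho r s # rhos (Suc r) s a"

definition eqv :: "nat \<Rightarrow> nat \<Rightarrow> nat \<Rightarrow> nat \<times> nat \<Rightarrow> nat \<times> nat \<Rightarrow> (qarrow list \<Rightarrow> 'k::field) \<Rightarrow> (qarrow list \<Rightarrow> 'k) \<Rightarrow> bool" where
  "eqv n g m X Y c d \<longleftrightarrow> in_ideal n g m X Y (\<lambda>w. c w - d w)"

lemma sandwich_app: "sandwich v c u (v @ w @ u) = c w"
proof -
  have "{w'. c w' \<noteq> 0 \<and> v @ w @ u = v @ w' @ u} = (if c w \<noteq> 0 then {w} else {})" by auto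
  then show ?thesis unfolding sandwich_def by auto
qed

lemma sandwich_not: "(\<And>w. x \<noteq> v @ w @ u) \<Longrightarrow> sandwich v c u x = 0"
  unfolding sandwich_def by auto

lemma sandwich_zero: "sandwich v (\<lambda>_. 0) u = (\<lambda>_. 0)"
  unfolding sandwich_def by auto

lemma sandwich_add: "sandwich v (\<lambda>w. c w + d w) u = (\<lambda>w. sandwich v c u w + sandwich v d u w)"
proof
  fix x show "sandwich v (\<lambda>w. c w + d w) u x = sandwich v c u x + sandwich v d u x"
    by (cases "\<exists>w. x = v @ w @ u") (auto simp: sandwich_app sandwich_not)
qed

lemma sandwich_smult: "sandwich v (\<lambda>w. a * c w) u = (\<lambda>w. a * sandwich v c u w)"
proof
  fix x show "sandwich v (\<lambda>w. a * c w) u x = a * sandwich v c u x"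
    by (cases "\<exists>w. x = v @ w @ u") (auto simp: sandwich_app sandwich_not)
qed

lemma sandwich_minus: "sandwich v (\<lambda>w. c w - d w) u = (\<lambda>w. sandwich v c u w - sandwich v d u w)"
proof
  fix x show "sandwich v (\<lambda>w. c w - d w) u x = sandwich v c u x - sandwich v d u x"
    by (cases "\<exists>w. x = v @ w @ u") (auto simp: sandwich_app sandwich_not)
qed

lemma sandwich_pvec: "sandwich v (pvec w) u = pvec (v @ w @ u)"
proof
  fix x show "sandwich v (pvec w) u x = pvec (v @ w @ u) x"
    by (cases "\<exists>w. x = v @ w @ u") (auto simp: sandwich_app sandwich_not pvec_def split: if_splits)
qed

lemma sandwich_nil: "sandwich [] c [] = c"
  using sandwich_app[of "[]" c "[]"] by auto

lemma sandwich_comp: "sandwich v (sandwich v' c u') u = sandwich (v @ v') c (u' @ u)"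
proof
  fix x show "sandwich v (sandwich v' c u') u x = sandwich (v @ v') c (u' @ u) x"
  proof (cases "\<exists>w. x = v @ w @ u")
    case True
    then obtain w where x: "x = v @ w @ u" by blast
    show ?thesis
    proof (cases "\<exists>w'. w = v' @ w' @ u'")
      case True
      then obtain w' where "w = v' @ w' @ u'" by blast
      then show ?thesis using x by (metis append.assoc sandwich_app)
    next
      case False
      then have "\<And>w'. x \<noteq> (v @ v') @ w' @ (u' @ u)" using x by auto
      then show ?thesis using x False by (simp add: sandwich_app sandwich_not)
    qed
  next
    case False
    then have "\<And>w'. x \<noteq> (v @ v') @ w' @ (u' @ u)" by (metis append.assoc)
    then show ?thesis using False by (simp add: sandwich_not)
  qed
qed

lemma Flin_T: "finite T \<Longrightarrow> {w. c w \<noteq> 0} \<subseteq> T \<Longrightarrow>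
   Flin n g X c = (\<lambda>i j. \<Sum>w\<in>T. c w * Fpath n g X w i j)"
  unfolding Flin_def by (auto intro!: ext sum.mono_neutral_left)

lemma Flin_pvec: "Flin n g X (pvec w) = Fpath n g X w"
  by (subst Flin_T[of "{w}"]) (auto simp: pvec_def)

lemma Flin_pvec_diff: "w1 \<noteq> w2 \<Longrightarrow>
  Flin n g X (\<lambda>x. pvec w1 x - pvec w2 x) = (\<lambda>i j. Fpath n g X w1 i j - Fpath n g X w2 i j)"
  by (subst Flin_T[of "{w1,w2}"]) (auto simp: pvec_def)

lemma mcomp_zero_left: "mcomp V (\<lambda>_ _. 0) B = (\<lambda>_ _. 0)" by (simp add: mcomp_def fun_eq_iff)
lemma mcomp_zero_right: "mcomp V A (\<lambda>_ _. 0) = (\<lambda>_ _. 0)" by (simp add: mcomp_def fun_eq_iff)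

locale tube =
  fixes n g m :: nat
  assumes g1: "1 \<le> g" and gn: "g \<le> n"
begin

abbreviation "h \<equiv> hh n g"
abbreviation "N \<equiv> int (n+1)"

lemma h_pos: "0 < h" using gn by (simp add: hh_def)
lemma h_le: "h \<le> n" using g1 gn by (simp add: hh_def)
lemma g_h: "g + h = n + 1" using gn by (simp add: hh_def)

lemma QQ_decomp: "x < h \<Longrightarrow> QQ n g (h*d + x) = int g + int x + N * int d"
  using h_pos by (simp add: QQ_def)

lemma phi_decomp: "x < h \<Longrightarrow> phi n g (h*d + x) = pp g x + N * int d"
  using h_pos by (simp add: phi_def)

lemma pp_le: "x < h \<Longrightarrow> pp g x \<le> int g + int x" by (simp add: pp_def)
lemma pp_ge0: "0 \<le> pp g x" by (simp add: pp_def)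
lemma pp_lt: "x < y \<Longrightarrow> pp g x < pp g y" by (simp add: pp_def)
lemma pp_ltN: "x < h \<Longrightarrow> pp g x < N" using g_h by (simp add: pp_def)

lemma QQ_shift: "QQ n g (t + h*k) = QQ n g t + N * int k"
proof -
  have "t + h*k = h*(t div h + k) + t mod h" by (simp add: algebra_simps)
  then show ?thesis using QQ_decomp[of "t mod h" "t div h + k"] QQ_decomp[of "t mod h" "t div h"] h_pos
    by (simp add: algebra_simps)
qed

lemma phi_shift: "phi n g (t + h*k) = phi n g t + N * int k"
proof -
  have "t + h*k = h*(t div h + k) + t mod h" by (simp add: algebra_simps)
  then show ?thesis using phi_decomp[of "t mod h" "t div h + k"] phi_decomp[of "t mod h" "t div h"] h_pos
    by (simp add: algebra_simps)
qed

lemma QQ_Suc: "QQ n g t < QQ n g (Suc t)"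
proof -
  obtain d x where t: "t = h*d + x" and x: "x < h" using h_pos
    by (metis mod_less_divisor div_mult_mod_eq mult.commute)
  show ?thesis
  proof (cases "Suc x < h")
    case True
    then have "Suc t = h*d + Suc x" using t by simp
    then show ?thesis using QQ_decomp[OF True, of d] QQ_decomp[OF x, of d] t by simp
  next
    case False
    then have "Suc t = h*(Suc d) + 0" using t x by simp
    then have "QQ n g (Suc t) = int g + N * int (Suc d)" using QQ_decomp[of 0 "Suc d"] h_pos by simp
    moreover have "QQ n g t = int g + int x + N * int d" using QQ_decomp[OF x] t by simp
    ultimately show ?thesis using x g_h by (simp add: algebra_simps)
  qed
qed

lemma QQ_strict: "t < t' \<Longrightarrow> QQ n g t < QQ n g t'"
proof (induction t' rule: less_induct)
  case (less t')
  then obtain u where "t' = Suc u" "t \<le> u" by (cases t') auto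
  then show ?case using less QQ_Suc[of u] by (cases "t = u") force+
qed

lemma QQ_mono: "t \<le> t' \<Longrightarrow> QQ n g t \<le> QQ n g t'"
  using QQ_strict[of t t'] by (cases "t = t'") auto

lemma QQ_le_iff: "QQ n g t \<le> QQ n g t' \<longleftrightarrow> t \<le> t'"
  using QQ_strict[of t' t] QQ_mono by (meson not_le)

lemma QQ_eq_iff: "QQ n g t = QQ n g t' \<longleftrightarrow> t = t'"
  by (metis QQ_strict linorder_neq_iff less_irrefl)

lemma phi_Suc: "phi n g t < phi n g (Suc t)"
proof -
  obtain d x where t: "t = h*d + x" and x: "x < h" using h_pos
    by (metis mod_less_divisor div_mult_mod_eq mult.commute)
  show ?thesis
  proof (cases "Suc x < h")
    case True
    then have "Suc t = h*d + Suc x" using t by simp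
    then show ?thesis using phi_decomp[OF True, of d] phi_decomp[OF x, of d] t pp_lt[of x "Suc x"] by simp
  next
    case False
    then have "Suc t = h*(Suc d) + 0" using t x by simp
    then have "phi n g (Suc t) = N * int (Suc d)" using phi_decomp[of 0 "Suc d"] h_pos by (simp add: pp_def)
    moreover have "phi n g t = pp g x + N * int d" using phi_decomp[OF x] t by simp
    ultimately show ?thesis using x pp_ltN[OF x] by (simp add: algebra_simps)
  qed
qed

lemma phi_strict: "t < t' \<Longrightarrow> phi n g t < phi n g t'"
proof (induction t' rule: less_induct)
  case (less t')
  then obtain u where "t' = Suc u" "t \<le> u" by (cases t') auto
  then show ?case using less phi_Suc[of u] by (cases "t = u") force+
qed

lemma phi_mono: "t \<le> t' \<Longrightarrow> phi n g t \<le> phi n g t'"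
  using phi_strict[of t t'] by (cases "t = t'") auto

lemma phi_le_iff: "phi n g t \<le> phi n g t' \<longleftrightarrow> t \<le> t'"
  using phi_strict[of t' t] phi_mono by (meson not_le)

lemma phi_le_QQ_self: "phi n g t \<le> QQ n g t"
  using pp_le[of "t mod h"] h_pos by (simp add: phi_def QQ_def)

lemma QQ_lt_phi_Suc: "QQ n g t < phi n g (Suc t)"
proof -
  obtain d x where t: "t = h*d + x" and x: "x < h" using h_pos
    by (metis mod_less_divisor div_mult_mod_eq mult.commute)
  show ?thesis
  proof (cases "Suc x < h")
    case True
    then have "Suc t = h*d + Suc x" using t by simp
    then show ?thesis using phi_decomp[OF True, of d] QQ_decomp[OF x, of d] t by (simp add: pp_def)
  next
    case False
    then have "Suc t = h*(Suc d) + 0" using t x by simp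
    then have "phi n g (Suc t) = N * int (Suc d)" using phi_decomp[of 0 "Suc d"] h_pos by (simp add: pp_def)
    moreover have "QQ n g t = int g + int x + N * int d" using QQ_decomp[OF x] t by simp
    ultimately show ?thesis using x g_h by (simp add: algebra_simps)
  qed
qed

lemma phi_le_QQ_iff: "phi n g j \<le> QQ n g t \<longleftrightarrow> j \<le> t"
proof
  assume "j \<le> t" then show "phi n g j \<le> QQ n g t"
    using phi_le_QQ_self[of j] QQ_mono[of j t] by simp
next
  assume a: "phi n g j \<le> QQ n g t"
  show "j \<le> t"
  proof (rule ccontr)
    assume "\<not> j \<le> t"
    then have "Suc t \<le> j" by simp
    then show False using phi_mono[of "Suc t" j] QQ_lt_phi_Suc[of t] a by simp
  qed
qed

lemma phi_small: "s < h \<Longrightarrow> phi n g s = pp g s" by (simp add: phi_def)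
lemma QQ_small: "s < h \<Longrightarrow> QQ n g s = int g + int s" by (simp add: QQ_def)

lemma QQ_mod: "QQ n g t mod N = int g + int (t mod h)"
proof -
  have "int g + int (t mod h) < N" using g_h h_pos
    by (metis add_le_cancel_left int_ops(5) mod_less_divisor nat_less_le not_less of_nat_less_iff order_less_le_trans)
  moreover have "QQ n g t = (int g + int (t mod h)) + N * int (t div h)" unfolding QQ_def by simp
  ultimately show ?thesis by (simp add: mod_pos_pos_trivial)
qed

lemma Fobj_eq: "Fobj n g (r,s) = (pp g s, QQ n g (r+s))"
  by (simp add: Fobj_def qq_QQ)

lemma Farr_Rho: "Farr n g (Rho r s) = PS N 0 (pp g s) (QQ n g (r+s))"
  by (auto simp: PS_def qq_QQ fun_eq_iff)

lemma Farr_Pi0: "Farr n g (Pi r 0) = PS N 1 N (QQ n g (r + h))"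
proof -
  have "r + 1 + (h - 1) = r + h" using h_pos by simp
  then show ?thesis by (auto simp: PS_def qq_QQ fun_eq_iff)
qed

lemma Farr_Pis: "s \<noteq> 0 \<Longrightarrow> Farr n g (Pi r s) = PS N 0 (pp g s) (QQ n g (r+s))"
proof -
  assume "s \<noteq> 0"
  then have "r + 1 + (s - 1) = r + s" by simp
  then show ?thesis using \<open>s \<noteq> 0\<close> by (auto simp: PS_def qq_QQ fun_eq_iff)
qed

declare Farr.simps[simp del]

lemma midentity_PS: "midentity V = PS N 0 (fst V) (snd V)"
  by (auto simp: PS_def midentity_def fun_eq_iff)

lemma is_path_src: "is_path n g m X Y w \<Longrightarrow> in_Q n g m X"
  by (cases w) (auto simp: valid_arrow_def)

lemma is_path_tgt: "is_path n g m X Y w \<Longrightarrow> in_Q n g m Y"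
  by (induction n g m X Y w rule: is_path.induct) auto

lemma is_path_append: "is_path n g m X Y (v @ u) \<longleftrightarrow> (\<exists>Z. is_path n g m X Z v \<and> is_path n g m Z Y u)"
  by (induction v arbitrary: X) (auto dest: is_path_src)

lemma is_path_single: "is_path n g m X Y [a] \<longleftrightarrow> valid_arrow n g m a \<and> qsrc n g a = X \<and> qtgt n g a = Y"
  by (auto simp: valid_arrow_def)

lemma Farr_row: assumes "Farr n g a i j \<noteq> 0" "snd (qsrc n g a) < h" shows
   "fst (Fobj n g (qsrc n g a)) \<le> i \<and> i \<le> snd (Fobj n g (qsrc n g a))"
proof (cases a)
  case (Rho r s)
  then show ?thesis using assms by (auto simp: Fobj_def qq_QQ Farr.simps split: if_splits)
next
  case (Pi r s)
  show ?thesis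
  proof (cases "s = 0")
    case True
    have "pp g (h - 1) \<le> N" using pp_ltN[of "h-1"] h_pos by simp
    moreover have "r + 1 + (h - 1) = r + h" using h_pos by simp
    ultimately show ?thesis using assms Pi True by (auto simp: Fobj_def qq_QQ Farr.simps split: if_splits)
  next
    case False
    then have "pp g (s - 1) \<le> pp g s" using pp_lt[of "s-1" s] by simp
    then show ?thesis using assms Pi False by (auto simp: Fobj_def qq_QQ Farr.simps split: if_splits)
  qed
qed

lemma mcomp_nz: "mcomp V A B i l \<noteq> 0 \<Longrightarrow> \<exists>j. A i j \<noteq> 0"
  unfolding mcomp_def by (metis (no_types, lifting) mult_eq_0_iff sum.neutral)

lemma Fpath_row: assumes "is_path n g m X Y w" "(Fpath n g X w i l :: 'k::field) \<noteq> 0" shows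
   "fst (Fobj n g X) \<le> i \<and> i \<le> snd (Fobj n g X)"
proof (cases w)
  case Nil
  then show ?thesis using assms by (auto simp: midentity_def split: if_splits)
next
  case (Cons a w')
  have "mcomp (Fobj n g (qtgt n g a)) (Farr n g a) (Fpath n g (qtgt n g a) w') i l \<noteq> (0::'k)"
    using assms Cons by simp
  then obtain j where "(Farr n g a i j :: 'k) \<noteq> 0" using mcomp_nz by blast
  moreover have "qsrc n g a = X" "snd X < h" using assms Cons by (auto simp: valid_arrow_def in_Q_def)
  ultimately show ?thesis using Farr_row by metis
qed

lemma mcomp_id_left: "(\<And>i l. B i l \<noteq> 0 \<Longrightarrow> fst V \<le> i \<and> i \<le> snd V) \<Longrightarrow> mcomp V (midentity V) B = B"
proof (rule ext, rule ext)
  fix i l assume a: "\<And>i l. B i l \<noteq> 0 \<Longrightarrow> fst V \<le> i \<and> i \<le> snd V"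
  have "mcomp V (midentity V) B i l = (\<Sum>j\<in>{fst V..snd V}. if j = i then B i l else 0)"
    unfolding mcomp_def midentity_def by (intro sum.cong) auto
  also have "\<dots> = B i l" using a[of i l] by (subst sum.delta) auto
  finally show "mcomp V (midentity V) B i l = B i l" .
qed

lemma Fpath_append: "is_path n g m X Z v \<Longrightarrow> is_path n g m Z Y u \<Longrightarrow>
   Fpath n g X (v @ u) = mcomp (Fobj n g Z) (Fpath n g X v) (Fpath n g Z u)"
proof (induction v arbitrary: X)
  case Nil
  then have "mcomp (Fobj n g X) (midentity (Fobj n g X)) (Fpath n g X u) = Fpath n g X u"
    using mcomp_id_left[of "Fpath n g X u" "Fobj n g X"] Fpath_row[of X Y u] by auto
  then show ?case using Nil by (metis append_Nil is_path.simps(1) Fpath.simps(1))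
next
  case (Cons a v)
  then show ?case by (simp add: mcomp_assoc)
qed

lemma splus_mod: "s < h \<Longrightarrow> splus n g s = Suc s mod h"
proof -
  assume s: "s < h"
  show ?thesis
  proof (cases "Suc s < h")
    case True then show ?thesis by (simp add: splus_def)
  next
    case False then have "Suc s = h" using s by simp
    then show ?thesis by (simp add: splus_def)
  qed
qed

lemma splus_lt: "splus n g s < h" using h_pos by (simp add: splus_def)

lemma qsrc_Pi_splus: "s < h \<Longrightarrow> qsrc n g (Pi r (splus n g s)) = (r+1, s)"
  by (auto simp: splus_def)

lemma pis_path: "in_Q n g m (r,s) \<Longrightarrow> b \<le> r \<Longrightarrow>
   is_path n g m (r,s) (r - b, (s+b) mod h) (pis n g r s b)"
proof (induction b arbitrary: r s)
  case 0
  then show ?case by (simp add: in_Q_def)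
next
  case (Suc b)
  let ?sp = "splus n g s"
  have s: "s < h" using Suc by (simp add: in_Q_def)
  have r: "1 \<le> r" using Suc by simp
  have sp: "?sp \<le> Suc s" by (simp add: splus_def)
  have q2: "in_Q n g m (r - 1, ?sp)" using Suc r sp splus_lt by (auto simp: in_Q_def)
  have v: "valid_arrow n g m (Pi (r-1) ?sp)"
    using q2 Suc.prems r qsrc_Pi_splus[OF s, of "r-1"] by (simp add: valid_arrow_def)
  have IH: "is_path n g m (r-1, ?sp) (r - 1 - b, (?sp + b) mod h) (pis n g (r-1) ?sp b)"
    using Suc.IH[OF q2] Suc.prems by simp
  have "(?sp + b) mod h = (s + Suc b) mod h" using splus_mod[OF s] by (simp add: mod_add_left_eq)
  then show ?case using IH v qsrc_Pi_splus[OF s, of "r-1"] r by simp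
qed

lemma rhos_path: "in_Q n g m (r + a, s) \<Longrightarrow> is_path n g m (r,s) (r+a, s) (rhos r s a)"
proof (induction a arbitrary: r)
  case 0 then show ?case by simp
next
  case (Suc a)
  then have "in_Q n g m (Suc r + a, s)" by simp
  moreover have "valid_arrow n g m (Rho r s)" using Suc.prems by (simp add: valid_arrow_def in_Q_def)
  ultimately show ?case using Suc.IH[of "Suc r"] by simp
qed

lemma rhos_snoc: "rhos r s a @ [Rho (r+a) s] = rhos r s (Suc a)"
proof (induction a arbitrary: r)
  case 0 then show ?case by simp
next
  case (Suc a)
  have "rhos r s (Suc a) @ [Rho (r + Suc a) s] = Rho r s # (rhos (Suc r) s a @ [Rho (Suc r + a) s])" by simp
  also have "\<dots> = rhos r s (Suc (Suc a))" using Suc.IH[of "Suc r"] by simp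
  finally show ?case .
qed

lemma pis_snoc: "s < h \<Longrightarrow> pis n g r s b @ [Pi (r - b - 1) (splus n g ((s+b) mod h))] = pis n g r s (Suc b)"
proof (induction b arbitrary: r s)
  case 0 then show ?case by simp
next
  case (Suc b)
  let ?sp = "splus n g s"
  have me: "(?sp + b) mod h = (s + Suc b) mod h" using splus_mod[OF Suc.prems] by (simp add: mod_add_left_eq)
  have IH: "pis n g (r-1) ?sp b @ [Pi (r - 1 - b - 1) (splus n g ((?sp + b) mod h))] = pis n g (r-1) ?sp (Suc b)"
    by (rule Suc.IH[OF splus_lt])
  have "r - Suc b - 1 = r - 1 - b - 1" by simp
  then have "pis n g r s (Suc b) @ [Pi (r - Suc b - 1) (splus n g ((s + Suc b) mod h))] =
     Pi (r-1) ?sp # (pis n g (r-1) ?sp b @ [Pi (r - 1 - b - 1) (splus n g ((?sp + b) mod h))])"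
    by (simp only: me pis.simps append_Cons)
  also have "\<dots> = pis n g r s (Suc (Suc b))" by (simp only: IH pis.simps)
  finally show ?case .
qed

lemma Fpath_rhos: "s < h \<Longrightarrow> Fpath n g (r,s) (rhos r s a) = PS N 0 (pp g s) (QQ n g (r+s))"
proof (induction a arbitrary: r)
  case 0 then show ?case by (simp add: midentity_PS Fobj_eq)
next
  case (Suc a)
  have "QQ n g (r+s) \<le> QQ n g (Suc r + s)" by (rule QQ_mono) simp
  then show ?case using Suc by (simp add: Fobj_eq Farr_Rho mcomp_PS)
qed

lemma Fpath_pis: "s < h \<Longrightarrow> b \<le> r \<Longrightarrow>
   (Fpath n g (r,s) (pis n g r s b) :: int \<Rightarrow> int \<Rightarrow> 'k::field) = PS N (int ((s+b) div h)) (phi n g (s+b)) (QQ n g (r+s))"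
proof (induction b arbitrary: r s)
  case 0 then show ?case by (simp add: midentity_PS Fobj_eq phi_small)
next
  case (Suc b)
  let ?sp = "splus n g s"
  have r: "1 \<le> r" using Suc by simp
  have IH: "(Fpath n g (r-1, ?sp) (pis n g (r-1) ?sp b) :: int \<Rightarrow> int \<Rightarrow> 'k) =
      PS N (int ((?sp+b) div h)) (phi n g (?sp+b)) (QQ n g (r - 1 + ?sp))"
    by (rule Suc.IH[OF splus_lt]) (use Suc.prems in simp)
  have lhs: "(Fpath n g (r,s) (pis n g r s (Suc b)) :: int \<Rightarrow> int \<Rightarrow> 'k) =
     mcomp (Fobj n g (r-1, ?sp)) (Farr n g (Pi (r-1) ?sp)) (Fpath n g (r-1, ?sp) (pis n g (r-1) ?sp b))"
    by simp
  show ?case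
  proof (cases "Suc s < h")
    case True
    then have sp: "?sp = Suc s" by (simp add: splus_def)
    have e1: "r - 1 + Suc s = r + s" using r by simp
    have e2: "Suc s + b = s + Suc b" by simp
    have m1: "pp g (Suc s) \<le> phi n g (s + Suc b)" using phi_mono[of "Suc s" "s + Suc b"] phi_small[OF True] by simp
    have e3: "Suc (r - Suc 0 + s) = r + s" using r by simp
    show ?thesis unfolding lhs IH unfolding sp e1 e2 using True m1
      by (simp add: Fobj_eq Farr_Pis mcomp_PS e1 e3)
  next
    case False
    then have sh: "Suc s = h" using Suc.prems by simp
    then have sp: "?sp = 0" by (simp add: splus_def)
    have e1: "r - 1 + h = r + s" using r sh by simp
    have e2: "s + Suc b = b + h*1" using sh by simp
    have d: "(b + h*1) div h = b div h + 1" using h_pos by simp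
    have ph: "phi n g (b + h*1) = phi n g b + N" using phi_shift[of b 1] by simp
    have q: "QQ n g (r - 1 + h*1) = QQ n g (r - 1) + N" using QQ_shift[of "r-1" 1] by simp
    have p0: "0 \<le> phi n g b" unfolding phi_def using pp_ge0 by simp
    have q': "1 + (int n + QQ n g (r - Suc 0)) = QQ n g (r+s)" using q e1 by (simp add: algebra_simps)
    show ?thesis unfolding lhs IH unfolding sp e2 d ph using q' e1 p0 sh
      by (simp add: Fobj_eq Farr_Pi0 mcomp_PS pp_def algebra_simps)
  qed
qed

lemma Fpath_canon:
  assumes "s < h" "b \<le> r" "in_Q n g m (r,s)" "in_Q n g m (r - b + a, (s+b) mod h)"
  shows "Fpath n g (r,s) (pis n g r s b @ rhos (r-b) ((s+b) mod h) a) =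
         PS N (int ((s+b) div h)) (phi n g (s+b)) (QQ n g (r+s))"
proof -
  let ?s' = "(s+b) mod h" and ?k = "(s+b) div h"
  have p1: "is_path n g m (r,s) (r-b, ?s') (pis n g r s b)" using pis_path assms by simp
  have p2: "is_path n g m (r-b, ?s') (r - b + a, ?s') (rhos (r-b) ?s' a)" by (rule rhos_path) (use assms(4) in simp)
  have s': "?s' < h" using h_pos by simp
  have ph: "phi n g (s+b) = pp g ?s' + N * int ?k" by (simp add: phi_def)
  have "r - b + ?s' + h * ?k = r + s" using assms(2) by (metis add.assoc div_mult_mod_eq le_add_diff_inverse2 add.commute mult.commute)
  then have q: "QQ n g (r - b + ?s') + N * int ?k = QQ n g (r+s)" using QQ_shift[of "r - b + ?s'" ?k] by metis
  show ?thesis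
    unfolding Fpath_append[OF p1 p2] Fpath_pis[OF assms(1,2)] Fpath_rhos[OF s']
    by (simp only: Fobj_eq mcomp_PS fst_conv snd_conv q ph[symmetric]) simp
qed

lemma I_sandwich: "in_ideal n g m Z Z' c \<Longrightarrow> is_path n g m X Z v \<Longrightarrow> is_path n g m Z' Y u \<Longrightarrow>
   in_ideal n g m X Y (sandwich v c u)"
proof (induction rule: in_ideal.induct)
  case zero
  then show ?case by (simp add: sandwich_zero in_ideal.zero)
next
  case (gen A B \<rho> v' u')
  have "is_path n g m X A (v @ v')" using gen is_path_append by blast
  moreover have "is_path n g m B Y (u' @ u)" using gen is_path_append by blast
  ultimately show ?case using gen(1) by (simp add: sandwich_comp in_ideal.gen)
next
  case (add c d)
  then show ?case by (simp add: sandwich_add in_ideal.add)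
next
  case (smult c a)
  then show ?case by (simp add: sandwich_smult in_ideal.smult)
qed

lemma I_minus: "in_ideal n g m X Y c \<Longrightarrow> in_ideal n g m X Y d \<Longrightarrow> in_ideal n g m X Y (\<lambda>w. c w - d w)"
proof -
  assume "in_ideal n g m X Y c" "in_ideal n g m X Y d"
  then have "in_ideal n g m X Y (\<lambda>w. c w + (\<lambda>w. (-1) * d w) w)" by (intro in_ideal.add in_ideal.smult)
  then show ?thesis by simp
qed

lemma I_sum: "finite S \<Longrightarrow> (\<And>i. i \<in> S \<Longrightarrow> in_ideal n g m X Y (f i)) \<Longrightarrow> in_ideal n g m X Y (\<lambda>w. \<Sum>i\<in>S. f i w)"
proof (induction S rule: finite_induct)
  case empty then show ?case by (simp add: in_ideal.zero)
next
  case (insert x F)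
  then have "in_ideal n g m X Y (\<lambda>w. f x w + (\<lambda>w. \<Sum>i\<in>F. f i w) w)" by (intro in_ideal.add) auto
  then show ?case using insert by simp
qed

lemma I_cong: "in_ideal n g m X Y c \<Longrightarrow> c = d \<Longrightarrow> in_ideal n g m X Y d" by simp

lemma eqv_refl: "eqv n g m X Y c c"
  unfolding eqv_def using in_ideal.zero by simp

lemma eqv_trans: "eqv n g m X Y c d \<Longrightarrow> eqv n g m X Y d e \<Longrightarrow> eqv n g m X Y c e"
  unfolding eqv_def by (drule (1) in_ideal.add) simp

lemma eqv_ideal: "eqv n g m X Y c d \<Longrightarrow> in_ideal n g m X Y d \<Longrightarrow> in_ideal n g m X Y c"
  unfolding eqv_def by (drule (1) in_ideal.add) simp

lemma eqv_ctx: "eqv n g m Z Z' (pvec w1 :: qarrow list \<Rightarrow> 'k::field) (pvec w2) \<Longrightarrow> is_path n g m X Z v \<Longrightarrow> is_path n g m Z' Y u \<Longrightarrow>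
   eqv n g m X Y (pvec (v @ w1 @ u) :: qarrow list \<Rightarrow> 'k) (pvec (v @ w2 @ u))"
  unfolding eqv_def
proof -
  assume a: "in_ideal n g m Z Z' (\<lambda>w. (pvec w1 w :: 'k) - pvec w2 w)" "is_path n g m X Z v" "is_path n g m Z' Y u"
  have "in_ideal n g m X Y (sandwich v (\<lambda>w. (pvec w1 w :: 'k) - pvec w2 w) u)" by (rule I_sandwich[OF a])
  then show "in_ideal n g m X Y (\<lambda>w. (pvec (v @ w1 @ u) w :: 'k) - pvec (v @ w2 @ u) w)"
    unfolding sandwich_minus sandwich_pvec .
qed

lemma ideal_ctx: "in_ideal n g m Z Z' (pvec w :: qarrow list \<Rightarrow> 'k::field) \<Longrightarrow> is_path n g m X Z v \<Longrightarrow> is_path n g m Z' Y u \<Longrightarrow>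
   in_ideal n g m X Y (pvec (v @ w @ u) :: qarrow list \<Rightarrow> 'k)"
  using I_sandwich[of Z Z' "pvec w :: qarrow list \<Rightarrow> 'k" X v Y u] by (simp add: sandwich_pvec)

lemma R1: assumes "s < h" "valid_arrow n g m (Rho (r+1) s)" "valid_arrow n g m (Pi (r+1) (splus n g s))"
   "valid_arrow n g m (Pi r (splus n g s))" "valid_arrow n g m (Rho r (splus n g s))"
  shows "eqv n g m (r+1, s) (r+1, splus n g s) (pvec [Rho (r+1) s, Pi (r+1) (splus n g s)] :: qarrow list \<Rightarrow> 'k::field) (pvec [Pi r (splus n g s), Rho r (splus n g s)])"
proof -
  let ?rho = "(\<lambda>w. pvec [Rho (r + 1) s, Pi (r + 1) (splus n g s)] w - pvec [Pi r (splus n g s), Rho r (splus n g s)] w) :: qarrow list \<Rightarrow> 'k"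
  have "((r + 1, s), (r + 1, splus n g s), ?rho) \<in> rel_gen n g m"
    unfolding rel_gen_def using assms by blast
  moreover have "is_path n g m (r+1,s) (r+1,s) []" using assms(2) by (simp add: valid_arrow_def)
  moreover have "is_path n g m (r+1, splus n g s) (r+1, splus n g s) []" using assms(5) by (simp add: valid_arrow_def)
  ultimately have "in_ideal n g m (r+1, s) (r+1, splus n g s) (sandwich [] ?rho [])" by (rule in_ideal.gen)
  then show ?thesis unfolding eqv_def sandwich_nil .
qed

lemma R2: assumes "s < h" "valid_arrow n g m (Rho 0 s)" "valid_arrow n g m (Pi 0 (splus n g s))"
  shows "in_ideal n g m (0, s) (0, splus n g s) (pvec [Rho 0 s, Pi 0 (splus n g s)] :: qarrow list \<Rightarrow> 'k::field)"
proof -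
  have "((0, s), (0, splus n g s), pvec [Rho 0 s, Pi 0 (splus n g s)] :: qarrow list \<Rightarrow> 'k) \<in> rel_gen n g m"
    unfolding rel_gen_def using assms by blast
  moreover have "is_path n g m (0,s) (0,s) []" using assms(2) by (simp add: valid_arrow_def)
  moreover have "is_path n g m (0, splus n g s) (0, splus n g s) []" using assms(3) by (simp add: valid_arrow_def)
  ultimately have "in_ideal n g m (0, s) (0, splus n g s) (sandwich [] (pvec [Rho 0 s, Pi 0 (splus n g s)] :: qarrow list \<Rightarrow> 'k) [])" by (rule in_ideal.gen)
  then show ?thesis unfolding sandwich_nil .
qed

lemma bubble:
  assumes "is_path n g m X Y (v @ rhos r s a @ [Pi (r+a-1) (splus n g s)] @ u)" "s < h" "1 \<le> r + a"
  shows "(1 \<le> r \<longrightarrow> eqv n g m X Y (pvec (v @ rhos r s a @ [Pi (r+a-1) (splus n g s)] @ u) :: qarrow list \<Rightarrow> 'k::field)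
            (pvec (v @ [Pi (r-1) (splus n g s)] @ rhos (r-1) (splus n g s) a @ u)))
       \<and> (r = 0 \<longrightarrow> in_ideal n g m X Y (pvec (v @ rhos r s a @ [Pi (r+a-1) (splus n g s)] @ u) :: qarrow list \<Rightarrow> 'k))"
  using assms
proof (induction a arbitrary: u)
  case 0
  then show ?case using eqv_refl by simp
next
  case (Suc a)
  let ?sp = "splus n g s"
  let ?P = "v @ rhos r s (Suc a) @ [Pi (r + Suc a - 1) ?sp] @ u"
  have Peq: "?P = (v @ rhos r s a) @ [Rho (r+a) s, Pi (r+a) ?sp] @ u"
    using rhos_snoc[of r s a] by (metis append.assoc append_Cons append_Nil add_Suc_right diff_Suc_1)
  have path: "is_path n g m X Y ((v @ rhos r s a) @ [Rho (r+a) s, Pi (r+a) ?sp] @ u)" using Suc.prems(1) Peq by metis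
  then obtain Z1 Z2 where p1: "is_path n g m X Z1 (v @ rhos r s a)"
      and p2: "is_path n g m Z1 Z2 [Rho (r+a) s, Pi (r+a) ?sp]" and p3: "is_path n g m Z2 Y u"
    unfolding is_path_append by blast
  have Z1: "Z1 = (r+a, s)" and Z2: "Z2 = (r+a, ?sp)" and vR: "valid_arrow n g m (Rho (r+a) s)"
    and vP: "valid_arrow n g m (Pi (r+a) ?sp)"
    using p2 qsrc_Pi_splus[OF Suc.prems(2)] by auto
  have qZ1: "in_Q n g m (r+a, s)" and qZ2: "in_Q n g m (r+a, ?sp)" using vR vP Z1 Z2 p2
    by (auto simp: valid_arrow_def)
  show ?case
  proof (cases "r + a = 0")
    case False
    define r' where "r' = r + a - 1"
    have r': "r' + 1 = r + a" using False r'_def by simp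
    have qr': "in_Q n g m (r', ?sp)" using qZ2 r' by (auto simp: in_Q_def)
    have vP': "valid_arrow n g m (Pi r' ?sp)"
      using qr' qZ1 r' qsrc_Pi_splus[OF Suc.prems(2), of r'] by (simp add: valid_arrow_def)
    have vR': "valid_arrow n g m (Rho r' ?sp)" using qr' qZ2 r' by (simp add: valid_arrow_def)
    have rel: "eqv n g m (r+a, s) (r+a, ?sp) (pvec [Rho (r+a) s, Pi (r+a) ?sp] :: qarrow list \<Rightarrow> 'k)
              (pvec [Pi r' ?sp, Rho r' ?sp])"
      using R1[OF Suc.prems(2), of r'] vR vP vP' vR' r' by simp
    have e1: "eqv n g m X Y (pvec ?P :: qarrow list \<Rightarrow> 'k) (pvec ((v @ rhos r s a) @ [Pi r' ?sp, Rho r' ?sp] @ u))"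
      using eqv_ctx[OF rel, of X "v @ rhos r s a" Y u] p1 p3 Z1 Z2 Peq by simp
    let ?P' = "v @ rhos r s a @ [Pi (r+a-1) ?sp] @ (Rho r' ?sp # u)"
    have P'eq: "(v @ rhos r s a) @ [Pi r' ?sp, Rho r' ?sp] @ u = ?P'" using r'_def by simp
    have pP': "is_path n g m X Y ?P'"
    proof -
      have "is_path n g m Z1 Z2 [Pi r' ?sp, Rho r' ?sp]"
        using vP' vR' Z1 Z2 r' qZ2 qsrc_Pi_splus[OF Suc.prems(2), of r'] by simp
      then show ?thesis using p1 p3 P'eq[symmetric] is_path_append by metis
    qed
    have IH: "(1 \<le> r \<longrightarrow> eqv n g m X Y (pvec ?P' :: qarrow list \<Rightarrow> 'k)
            (pvec (v @ [Pi (r-1) ?sp] @ rhos (r-1) ?sp a @ (Rho r' ?sp # u))))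
       \<and> (r = 0 \<longrightarrow> in_ideal n g m X Y (pvec ?P' :: qarrow list \<Rightarrow> 'k))"
      using Suc.IH[OF pP' Suc.prems(2)] False by simp
    have e2: "eqv n g m X Y (pvec ?P :: qarrow list \<Rightarrow> 'k) (pvec ?P')" using e1 P'eq by simp
    show ?thesis
    proof (intro conjI impI)
      assume r1: "1 \<le> r"
      have "rhos (r-1) ?sp a @ [Rho (r - 1 + a) ?sp] = rhos (r-1) ?sp (Suc a)" by (rule rhos_snoc)
      moreover have "r - 1 + a = r'" using r1 r'_def by simp
      ultimately have "v @ [Pi (r-1) ?sp] @ rhos (r-1) ?sp a @ (Rho r' ?sp # u) = v @ [Pi (r-1) ?sp] @ rhos (r-1) ?sp (Suc a) @ u"
        by (metis append.assoc append_Cons append_Nil)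
      then show "eqv n g m X Y (pvec ?P :: qarrow list \<Rightarrow> 'k) (pvec (v @ [Pi (r-1) ?sp] @ rhos (r-1) ?sp (Suc a) @ u))"
        using eqv_trans[OF e2] IH r1 by metis
    next
      assume "r = 0"
      then show "in_ideal n g m X Y (pvec ?P :: qarrow list \<Rightarrow> 'k)" using IH e2 eqv_ideal by blast
    qed
  next
    case True
    then have r0: "r = 0" "a = 0" by auto
    have "in_ideal n g m (0, s) (0, ?sp) (pvec [Rho 0 s, Pi 0 ?sp] :: qarrow list \<Rightarrow> 'k)"
      using R2[OF Suc.prems(2)] vR vP r0 by simp
    moreover have p1': "is_path n g m X (0,s) (v @ rhos r s a)" using p1 Z1 r0 by simp
    moreover have p3': "is_path n g m (0, ?sp) Y u" using p3 Z2 r0 by simp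
    ultimately have "in_ideal n g m X Y (pvec ((v @ rhos r s a) @ [Rho 0 s, Pi 0 ?sp] @ u) :: qarrow list \<Rightarrow> 'k)"
      by (rule ideal_ctx)
    then have "in_ideal n g m X Y (pvec ((v @ rhos r s a) @ [Rho (r+a) s, Pi (r+a) ?sp] @ u) :: qarrow list \<Rightarrow> 'k)"
      using r0 by simp
    then show ?thesis using Peq r0 by simp
  qed
qed

lemma splus_inv: "t < h \<Longrightarrow> s' = (if t = 0 then h - 1 else t - 1) \<Longrightarrow> t = splus n g s'"
  using h_pos by (auto simp: splus_def)

lemma nf:
  assumes "is_path n g m (r,s) Y w"
  shows "in_ideal n g m (r,s) Y (pvec w :: qarrow list \<Rightarrow> 'k::field) \<or>
    (\<exists>b a. b \<le> r \<and> Y = (r - b + a, (s + b) mod h) \<and>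
       eqv n g m (r,s) Y (pvec w :: qarrow list \<Rightarrow> 'k) (pvec (pis n g r s b @ rhos (r - b) ((s + b) mod h) a)))"
  using assms
proof (induction w arbitrary: Y rule: rev_induct)
  case Nil
  then have "Y = (r,s)" "s < h" by (auto simp: in_Q_def)
  then have "Y = (r - 0 + 0, (s + 0) mod h)" by simp
  then show ?case using eqv_refl by fastforce
next
  case (snoc x w)
  then obtain Z where pw: "is_path n g m (r,s) Z w" and px: "is_path n g m Z Y [x]"
    unfolding is_path_append by blast
  have s: "s < h" using is_path_src[OF pw] by (simp add: in_Q_def)
  have pnil: "is_path n g m (r,s) (r,s) []" using is_path_src[OF pw] by simp
  from snoc.IH[OF pw] show ?case
  proof
    assume "in_ideal n g m (r,s) Z (pvec w :: qarrow list \<Rightarrow> 'k)"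
    then have "in_ideal n g m (r,s) Y (pvec ([] @ w @ [x]) :: qarrow list \<Rightarrow> 'k)"
      using ideal_ctx pnil px by blast
    then show ?case by simp
  next
    assume "\<exists>b a. b \<le> r \<and> Z = (r - b + a, (s + b) mod h) \<and>
       eqv n g m (r,s) Z (pvec w :: qarrow list \<Rightarrow> 'k) (pvec (pis n g r s b @ rhos (r - b) ((s + b) mod h) a))"
    then obtain b a where b: "b \<le> r" and Z: "Z = (r - b + a, (s + b) mod h)"
      and e: "eqv n g m (r,s) Z (pvec w :: qarrow list \<Rightarrow> 'k) (pvec (pis n g r s b @ rhos (r - b) ((s + b) mod h) a))"
      by blast
    let ?s' = "(s+b) mod h"
    let ?C = "pis n g r s b @ rhos (r - b) ?s' a"
    have e1: "eqv n g m (r,s) Y (pvec (w @ [x]) :: qarrow list \<Rightarrow> 'k) (pvec (?C @ [x]))"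
      using eqv_ctx[OF e pnil px] by simp
    have qZ: "in_Q n g m Z" using pw is_path_tgt by blast
    have pC: "is_path n g m (r,s) Z ?C"
    proof -
      have "is_path n g m (r,s) (r - b, ?s') (pis n g r s b)" using pis_path b pnil by simp
      moreover have "is_path n g m (r - b, ?s') (r - b + a, ?s') (rhos (r - b) ?s' a)"
        by (rule rhos_path) (use qZ Z in simp)
      ultimately show ?thesis using Z is_path_append by blast
    qed
    have pCx: "is_path n g m (r,s) Y (?C @ [x])" using pC px is_path_append by blast
    show ?case
    proof (cases x)
      case (Rho r1 s1)
      then have r1: "r1 = r - b + a" "s1 = ?s'" "Y = (r - b + Suc a, ?s')" using px Z by auto
      have "?C @ [x] = pis n g r s b @ rhos (r - b) ?s' (Suc a)"
        using rhos_snoc[of "r-b" ?s' a] Rho r1 by simp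
      then show ?thesis using e1 r1 b by metis
    next
      case (Pi r1 t)
      have t: "t < h" using px Pi by (auto simp: valid_arrow_def in_Q_def)
      have src: "(r1 + 1, if t = 0 then h - 1 else t - 1) = Z" using px Pi by auto
      then have tsp: "t = splus n g ?s'" using splus_inv[OF t] Z by auto
      have r1: "r1 + 1 = r - b + a" using src Z by auto
      have Y: "Y = (r1, t)" using px Pi by auto
      have s': "?s' < h" using h_pos by simp
      have Ceq: "?C @ [x] = pis n g r s b @ rhos (r - b) ?s' a @ [Pi (r - b + a - 1) (splus n g ?s')] @ []"
        using Pi tsp r1 by simp
      note bub = bubble[of "(r,s)" Y "pis n g r s b" "r - b" ?s' a "[]", OF _ s']
      have bub2: "(1 \<le> r - b \<longrightarrow> eqv n g m (r,s) Y (pvec (?C @ [x]) :: qarrow list \<Rightarrow> 'k)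
            (pvec (pis n g r s b @ [Pi (r - b - 1) (splus n g ?s')] @ rhos (r - b - 1) (splus n g ?s') a @ [])))
       \<and> (r - b = 0 \<longrightarrow> in_ideal n g m (r,s) Y (pvec (?C @ [x]) :: qarrow list \<Rightarrow> 'k))"
        using bub pCx Ceq r1 by simp
      show ?thesis
      proof (cases "r - b = 0")
        case True
        then show ?thesis using bub2 e1 eqv_ideal by blast
      next
        case False
        have ps: "pis n g r s b @ [Pi (r - b - 1) (splus n g ?s')] = pis n g r s (Suc b)"
          by (rule pis_snoc[OF s])
        have sp: "splus n g ?s' = (s + Suc b) mod h" using splus_mod[OF s'] by (simp add: mod_Suc_eq)
        have "pis n g r s b @ [Pi (r - b - 1) (splus n g ?s')] @ rhos (r - b - 1) (splus n g ?s') a @ [] =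
              pis n g r s (Suc b) @ rhos (r - Suc b) ((s + Suc b) mod h) a"
          using ps sp by (metis append.assoc append_Nil2 diff_Suc_eq_diff_pred diff_commute)
        moreover have "Y = (r - Suc b + a, (s + Suc b) mod h)" using Y tsp sp r1 False by auto
        moreover have "Suc b \<le> r" using False b by simp
        moreover have "eqv n g m (r,s) Y (pvec (?C @ [x]) :: qarrow list \<Rightarrow> 'k)
            (pvec (pis n g r s b @ [Pi (r - b - 1) (splus n g ?s')] @ rhos (r - b - 1) (splus n g ?s') a @ []))"
          using bub2 False by simp
        ultimately have "eqv n g m (r,s) Y (pvec (w @ [x]) :: qarrow list \<Rightarrow> 'k)
            (pvec (pis n g r s (Suc b) @ rhos (r - Suc b) ((s + Suc b) mod h) a))"
          using eqv_trans[OF e1] by simp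
        then show ?thesis using \<open>Y = (r - Suc b + a, (s + Suc b) mod h)\<close> \<open>Suc b \<le> r\<close> by blast
      qed
    qed
  qed
qed

lemma F_R1: assumes "s < h"
  shows "(Fpath n g (r+1,s) [Rho (r+1) s, Pi (r+1) (splus n g s)] :: int \<Rightarrow> int \<Rightarrow> 'k::field)
       = Fpath n g (r+1,s) [Pi r (splus n g s), Rho r (splus n g s)]"
proof (cases "Suc s < h")
  case True
  then have sp: "splus n g s = Suc s" by (simp add: splus_def)
  have m1: "QQ n g (Suc (Suc (r + s))) \<ge> QQ n g (Suc (r + s))" by (rule QQ_mono) simp
  have m2: "pp g s \<le> pp g (Suc s)" using pp_lt[of s "Suc s"] by simp
  show ?thesis unfolding sp using m1 m2
    by (simp add: Farr_Rho Farr_Pis midentity_PS mcomp_PS Fobj_eq)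
next
  case False
  then have sh: "Suc s = h" using assms by simp
  then have sp: "splus n g s = 0" by (simp add: splus_def)
  have e1: "Suc (r + s) = r + h*1" "Suc (Suc (r + s)) = Suc r + h*1" using sh by auto
  have q1: "QQ n g (Suc (r + s)) = QQ n g r + N" "QQ n g (Suc (Suc (r + s))) = QQ n g (Suc r) + N"
    using QQ_shift[of "Suc r" 1] QQ_shift[of r 1] unfolding e1 by auto
  have m1: "QQ n g (r + h) \<le> QQ n g (Suc r + h)" by (rule QQ_mono) simp
  have m2: "QQ n g r \<le> QQ n g (Suc r)" by (rule QQ_mono) simp
  have q2: "QQ n g (r + h) = QQ n g r + N" "QQ n g (Suc (r + h)) = QQ n g (Suc r) + N"
    using QQ_shift[of "Suc r" 1] QQ_shift[of r 1] by auto
  have m3: "pp g s \<le> N" using pp_ltN[of s] assms by simp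
  show ?thesis unfolding sp using m2 m3 q1 q2
    by (simp add: Farr_Rho Farr_Pi0 midentity_PS mcomp_PS Fobj_eq pp_def algebra_simps)
qed

lemma F_R2: assumes "s < h"
  shows "(Fpath n g (0,s) [Rho 0 s, Pi 0 (splus n g s)] :: int \<Rightarrow> int \<Rightarrow> 'k::field) = (\<lambda>_ _. 0)"
proof (cases "Suc s < h")
  case True
  then have sp: "splus n g s = Suc s" by (simp add: splus_def)
  have "QQ n g s < pp g (Suc s)" using QQ_small[OF assms] True by (simp add: pp_def)
  then show ?thesis unfolding sp
    by (simp add: Farr_Rho Farr_Pis midentity_PS mcomp_PS Fobj_eq PS_empty)
next
  case False
  then have sh: "Suc s = h" using assms by simp
  then have sp: "splus n g s = 0" by (simp add: splus_def)
  have "QQ n g s < N" using QQ_small[OF assms] sh g_h by simp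
  then show ?thesis unfolding sp
    by (simp add: Farr_Rho Farr_Pi0 midentity_PS mcomp_PS Fobj_eq PS_empty)
qed

lemma rel_gen_cases:
  assumes "(A, B, \<rho>) \<in> rel_gen n g m"
  shows "(\<exists>r s. s < h \<and> valid_arrow n g m (Rho (r + 1) s) \<and> valid_arrow n g m (Pi (r + 1) (splus n g s))
             \<and> valid_arrow n g m (Pi r (splus n g s)) \<and> valid_arrow n g m (Rho r (splus n g s))
             \<and> A = (r+1, s) \<and> B = (r+1, splus n g s)
             \<and> \<rho> = (\<lambda>w. pvec [Rho (r + 1) s, Pi (r + 1) (splus n g s)] w - pvec [Pi r (splus n g s), Rho r (splus n g s)] w))
       \<or> (\<exists>s. s < h \<and> valid_arrow n g m (Rho 0 s) \<and> valid_arrow n g m (Pi 0 (splus n g s))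
             \<and> A = (0, s) \<and> B = (0, splus n g s) \<and> \<rho> = pvec [Rho 0 s, Pi 0 (splus n g s)])"
  using assms unfolding rel_gen_def by blast

end



lemma hom_zero: "is_rep_hom n g V W (\<lambda>_ _. 0)"
  unfolding is_rep_hom_def up_map_def down_map_def by (auto simp: fun_eq_iff)

lemma up_map_add: "up_map p q (\<lambda>j. (f j :: 'k::field) + f' j) = (\<lambda>j. up_map p q f j + up_map p q f' j)"
  by (simp add: up_map_def fun_eq_iff)
lemma down_map_add: "down_map p q (\<lambda>j. (f j :: 'k::field) + f' j) = (\<lambda>j. down_map p q f j + down_map p q f' j)"
  by (simp add: down_map_def fun_eq_iff)
lemma up_map_smult: "up_map p q (\<lambda>j. (a :: 'k::field) * f j) = (\<lambda>j. a * up_map p q f j)"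
  by (simp add: up_map_def fun_eq_iff)
lemma down_map_smult: "down_map p q (\<lambda>j. (a :: 'k::field) * f j) = (\<lambda>j. a * down_map p q f j)"
  by (simp add: down_map_def fun_eq_iff)

lemma hom_add: assumes h1: "is_rep_hom n g V W M1" and h2: "is_rep_hom n g V W M2"
  shows "is_rep_hom n g V W (\<lambda>i j. M1 i j + M2 i j)"
  unfolding is_rep_hom_def
proof (intro conjI)
  show "\<forall>i j. M1 i j + M2 i j \<noteq> 0 \<longrightarrow> fst V \<le> i \<and> i \<le> snd V \<and> fst W \<le> j \<and> j \<le> snd W \<and> i mod int (n + 1) = j mod int (n + 1)"
  proof (intro allI impI)
    fix i j assume "M1 i j + M2 i j \<noteq> 0"
    then have "M1 i j \<noteq> 0 \<or> M2 i j \<noteq> 0" by auto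
    then show "fst V \<le> i \<and> i \<le> snd V \<and> fst W \<le> j \<and> j \<le> snd W \<and> i mod int (n + 1) = j mod int (n + 1)"
      using h1 h2 unfolding is_rep_hom_def by blast
  qed
next
  show "\<forall>x\<in>{0..<g}. \<forall>i. fst V \<le> i \<and> i \<le> snd V \<and> i mod int (n + 1) = int x \<longrightarrow>
        up_map (fst W) (snd W) (\<lambda>j. M1 i j + M2 i j) = (if i < snd V then (\<lambda>j. M1 (i+1) j + M2 (i+1) j) else (\<lambda>_. 0))"
  proof (intro ballI allI impI)
  fix x i assume x: "x \<in> {0..<g}" and c: "fst V \<le> i \<and> i \<le> snd V \<and> i mod int (n + 1) = int x"
  have e1: "up_map (fst W) (snd W) (M1 i) = (if i < snd V then M1 (i+1) else (\<lambda>_. 0))"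
    using h1 x c unfolding is_rep_hom_def by blast
  have e2: "up_map (fst W) (snd W) (M2 i) = (if i < snd V then M2 (i+1) else (\<lambda>_. 0))"
    using h2 x c unfolding is_rep_hom_def by blast
  show "up_map (fst W) (snd W) (\<lambda>j. M1 i j + M2 i j) = (if i < snd V then (\<lambda>j. M1 (i+1) j + M2 (i+1) j) else (\<lambda>_. 0))"
    unfolding up_map_add e1 e2 by auto
  qed
next
  show "\<forall>x\<in>{g..n}. \<forall>i. fst V \<le> i \<and> i \<le> snd V \<and> i mod int (n + 1) = int ((x + 1) mod (n + 1)) \<longrightarrow>
        down_map (fst W) (snd W) (\<lambda>j. M1 i j + M2 i j) = (if fst V < i then (\<lambda>j. M1 (i-1) j + M2 (i-1) j) else (\<lambda>_. 0))"
  proof (intro ballI allI impI)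
  fix x i assume x: "x \<in> {g..n}" and c: "fst V \<le> i \<and> i \<le> snd V \<and> i mod int (n + 1) = int ((x + 1) mod (n + 1))"
  have e1: "down_map (fst W) (snd W) (M1 i) = (if fst V < i then M1 (i-1) else (\<lambda>_. 0))"
    using h1 x c unfolding is_rep_hom_def by blast
  have e2: "down_map (fst W) (snd W) (M2 i) = (if fst V < i then M2 (i-1) else (\<lambda>_. 0))"
    using h2 x c unfolding is_rep_hom_def by blast
  show "down_map (fst W) (snd W) (\<lambda>j. M1 i j + M2 i j) = (if fst V < i then (\<lambda>j. M1 (i-1) j + M2 (i-1) j) else (\<lambda>_. 0))"
    unfolding down_map_add e1 e2 by auto
  qed
qed

lemma hom_smult: assumes h1: "is_rep_hom n g V W M"
  shows "is_rep_hom n g V W (\<lambda>i j. a * M i j)"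
  unfolding is_rep_hom_def
proof (intro conjI)
  show "\<forall>i j. a * M i j \<noteq> 0 \<longrightarrow> fst V \<le> i \<and> i \<le> snd V \<and> fst W \<le> j \<and> j \<le> snd W \<and> i mod int (n + 1) = j mod int (n + 1)"
  proof (intro allI impI)
    fix i j assume "a * M i j \<noteq> 0"
    then have "M i j \<noteq> 0" by auto
    then show "fst V \<le> i \<and> i \<le> snd V \<and> fst W \<le> j \<and> j \<le> snd W \<and> i mod int (n + 1) = j mod int (n + 1)"
      using h1 unfolding is_rep_hom_def by blast
  qed
next
  show "\<forall>x\<in>{0..<g}. \<forall>i. fst V \<le> i \<and> i \<le> snd V \<and> i mod int (n + 1) = int x \<longrightarrow>
        up_map (fst W) (snd W) (\<lambda>j. a * M i j) = (if i < snd V then (\<lambda>j. a * M (i+1) j) else (\<lambda>_. 0))"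
  proof (intro ballI allI impI)
  fix x i assume x: "x \<in> {0..<g}" and c: "fst V \<le> i \<and> i \<le> snd V \<and> i mod int (n + 1) = int x"
  have e1: "up_map (fst W) (snd W) (M i) = (if i < snd V then M (i+1) else (\<lambda>_. 0))"
    using h1 x c unfolding is_rep_hom_def by blast
  show "up_map (fst W) (snd W) (\<lambda>j. a * M i j) = (if i < snd V then (\<lambda>j. a * M (i+1) j) else (\<lambda>_. 0))"
    unfolding up_map_smult e1 by auto
  qed
next
  show "\<forall>x\<in>{g..n}. \<forall>i. fst V \<le> i \<and> i \<le> snd V \<and> i mod int (n + 1) = int ((x + 1) mod (n + 1)) \<longrightarrow>
        down_map (fst W) (snd W) (\<lambda>j. a * M i j) = (if fst V < i then (\<lambda>j. a * M (i-1) j) else (\<lambda>_. 0))"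
  proof (intro ballI allI impI)
  fix x i assume x: "x \<in> {g..n}" and c: "fst V \<le> i \<and> i \<le> snd V \<and> i mod int (n + 1) = int ((x + 1) mod (n + 1))"
  have e1: "down_map (fst W) (snd W) (M i) = (if fst V < i then M (i-1) else (\<lambda>_. 0))"
    using h1 x c unfolding is_rep_hom_def by blast
  show "down_map (fst W) (snd W) (\<lambda>j. a * M i j) = (if fst V < i then (\<lambda>j. a * M (i-1) j) else (\<lambda>_. 0))"
    unfolding down_map_smult e1 by auto
  qed
qed

lemma hom_sum: "finite S \<Longrightarrow> (\<And>x. x \<in> S \<Longrightarrow> is_rep_hom n g V W (F x)) \<Longrightarrow>
   is_rep_hom n g V W (\<lambda>i j. \<Sum>x\<in>S. a x * F x i j)"
proof (induction S rule: finite_induct)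
  case empty then show ?case by (simp add: hom_zero)
next
  case (insert x S)
  have "is_rep_hom n g V W (\<lambda>i j. a x * F x i j + (\<Sum>x\<in>S. a x * F x i j))"
    using insert by (intro hom_add hom_smult) auto
  then show ?case using insert by simp
qed
context tube begin
lemma rel_gen_E:
  assumes "(A, B, \<rho>) \<in> rel_gen n g m"
  obtains (K1) r s where "s < h" "valid_arrow n g m (Rho (r + 1) s)" "valid_arrow n g m (Pi (r + 1) (splus n g s))"
             "valid_arrow n g m (Pi r (splus n g s))" "valid_arrow n g m (Rho r (splus n g s))"
             "A = (r+1, s)" "B = (r+1, splus n g s)"
             "\<rho> = (\<lambda>w. pvec [Rho (r + 1) s, Pi (r + 1) (splus n g s)] w - pvec [Pi r (splus n g s), Rho r (splus n g s)] w)"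
  | (K2) s where "s < h" "valid_arrow n g m (Rho 0 s)" "valid_arrow n g m (Pi 0 (splus n g s))"
             "A = (0, s)" "B = (0, splus n g s)" "\<rho> = pvec [Rho 0 s, Pi 0 (splus n g s)]"
proof -
  from rel_gen_cases[OF assms] show ?thesis
  proof
    assume "\<exists>r s. s < h \<and> valid_arrow n g m (Rho (r + 1) s) \<and> valid_arrow n g m (Pi (r + 1) (splus n g s))
             \<and> valid_arrow n g m (Pi r (splus n g s)) \<and> valid_arrow n g m (Rho r (splus n g s))
             \<and> A = (r+1, s) \<and> B = (r+1, splus n g s)
             \<and> \<rho> = (\<lambda>w. pvec [Rho (r + 1) s, Pi (r + 1) (splus n g s)] w - pvec [Pi r (splus n g s), Rho r (splus n g s)] w)"
    then obtain r s where "s < h \<and> valid_arrow n g m (Rho (r + 1) s) \<and> valid_arrow n g m (Pi (r + 1) (splus n g s))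
             \<and> valid_arrow n g m (Pi r (splus n g s)) \<and> valid_arrow n g m (Rho r (splus n g s))
             \<and> A = (r+1, s) \<and> B = (r+1, splus n g s)
             \<and> \<rho> = (\<lambda>w. pvec [Rho (r + 1) s, Pi (r + 1) (splus n g s)] w - pvec [Pi r (splus n g s), Rho r (splus n g s)] w)"
      by (elim exE)
    then show ?thesis by (intro K1) (elim conjE, assumption)+
  next
    assume "\<exists>s. s < h \<and> valid_arrow n g m (Rho 0 s) \<and> valid_arrow n g m (Pi 0 (splus n g s))
             \<and> A = (0, s) \<and> B = (0, splus n g s) \<and> \<rho> = pvec [Rho 0 s, Pi 0 (splus n g s)]"
    then obtain s where "s < h \<and> valid_arrow n g m (Rho 0 s) \<and> valid_arrow n g m (Pi 0 (splus n g s))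
             \<and> A = (0, s) \<and> B = (0, splus n g s) \<and> \<rho> = pvec [Rho 0 s, Pi 0 (splus n g s)]"
      by (elim exE)
    then show ?thesis by (intro K2) (elim conjE, assumption)+
  qed
qed

lemma ideal_kernel:
  "in_ideal n g m X Y (c :: qarrow list \<Rightarrow> 'k::field) \<Longrightarrow>
     finite {w. c w \<noteq> 0} \<and> Flin n g X c = (\<lambda>_ _. 0)"
proof (induction rule: in_ideal.induct)
  case zero
  then show ?case by (simp add: Flin_def)
next
  case (gen A B \<rho> v u)
  from gen(1) show ?case
  proof (cases rule: rel_gen_E)
    case (K1 r s)
    note s = K1(1) and v = K1(2-5) and AB = K1(6-7) and rho = K1(8)
    let ?w1 = "[Rho (r + 1) s, Pi (r + 1) (splus n g s)]" and ?w2 = "[Pi r (splus n g s), Rho r (splus n g s)]"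
    have pw1: "is_path n g m A B ?w1" using v AB qsrc_Pi_splus[OF s] by (simp add: valid_arrow_def)
    have pw2: "is_path n g m A B ?w2" using v AB qsrc_Pi_splus[OF s] by (simp add: valid_arrow_def)
    have ne: "v @ ?w1 @ u \<noteq> v @ ?w2 @ u" by simp
    have sw: "sandwich v \<rho> u = (\<lambda>x. pvec (v @ ?w1 @ u) x - pvec (v @ ?w2 @ u) x)"
      unfolding rho sandwich_minus sandwich_pvec by simp
    have F1: "(Fpath n g X (v @ ?w1 @ u) :: int \<Rightarrow> int \<Rightarrow> 'k) = mcomp (Fobj n g A) (Fpath n g X v) (mcomp (Fobj n g B) (Fpath n g A ?w1) (Fpath n g B u))"
    proof -
      have pwu: "is_path n g m A Y (?w1 @ u)" unfolding is_path_append using pw1 gen(3) by blast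
      show ?thesis unfolding Fpath_append[OF gen(2) pwu] Fpath_append[OF pw1 gen(3)] ..
    qed
    have F2: "(Fpath n g X (v @ ?w2 @ u) :: int \<Rightarrow> int \<Rightarrow> 'k) = mcomp (Fobj n g A) (Fpath n g X v) (mcomp (Fobj n g B) (Fpath n g A ?w2) (Fpath n g B u))"
    proof -
      have pwu: "is_path n g m A Y (?w2 @ u)" unfolding is_path_append using pw2 gen(3) by blast
      show ?thesis unfolding Fpath_append[OF gen(2) pwu] Fpath_append[OF pw2 gen(3)] ..
    qed
    have "(Fpath n g A ?w1 :: int \<Rightarrow> int \<Rightarrow> 'k) = Fpath n g A ?w2" using F_R1[OF s, of r] unfolding AB .
    then have "(Fpath n g X (v @ ?w1 @ u) :: int \<Rightarrow> int \<Rightarrow> 'k) = Fpath n g X (v @ ?w2 @ u)" using F1 F2 by simp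
    then have "Flin n g X (sandwich v \<rho> u) = (\<lambda>_ _. 0 :: 'k)"
      unfolding sw Flin_pvec_diff[OF ne] by simp
    moreover have "{w. sandwich v \<rho> u w \<noteq> 0} \<subseteq> {v @ ?w1 @ u, v @ ?w2 @ u}" unfolding sw by (auto simp: pvec_def)
    ultimately show ?thesis using finite_subset[of _ "{v @ ?w1 @ u, v @ ?w2 @ u}"] by auto
  next
    case (K2 s)
    note s = K2(1) and v = K2(2-3) and AB = K2(4-5) and rho = K2(6)
    let ?w1 = "[Rho 0 s, Pi 0 (splus n g s)]"
    have pw1: "is_path n g m A B ?w1" using v AB qsrc_Pi_splus[OF s] by (simp add: valid_arrow_def)
    have sw: "sandwich v \<rho> u = pvec (v @ ?w1 @ u)" unfolding rho sandwich_pvec by simp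
    have F1: "(Fpath n g X (v @ ?w1 @ u) :: int \<Rightarrow> int \<Rightarrow> 'k) = mcomp (Fobj n g A) (Fpath n g X v) (mcomp (Fobj n g B) (Fpath n g A ?w1) (Fpath n g B u))"
    proof -
      have pwu: "is_path n g m A Y (?w1 @ u)" unfolding is_path_append using pw1 gen(3) by blast
      show ?thesis unfolding Fpath_append[OF gen(2) pwu] Fpath_append[OF pw1 gen(3)] ..
    qed
    have "(Fpath n g A ?w1 :: int \<Rightarrow> int \<Rightarrow> 'k) = (\<lambda>_ _. 0)" using F_R2[OF s] unfolding AB .
    then have "Flin n g X (sandwich v \<rho> u) = (\<lambda>_ _. 0 :: 'k)"
      unfolding sw Flin_pvec F1 by (simp add: mcomp_zero_left mcomp_zero_right)
    moreover have "{w. sandwich v \<rho> u w \<noteq> 0} \<subseteq> {v @ ?w1 @ u}" unfolding sw by (auto simp: pvec_def)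
    ultimately show ?thesis using finite_subset[of _ "{v @ ?w1 @ u}"] by auto
  qed
next
  case (add c d)
  let ?T = "{w. c w \<noteq> 0} \<union> {w. d w \<noteq> 0}"
  have fT: "finite ?T" using add by simp
  have sub: "{w. c w + d w \<noteq> 0} \<subseteq> ?T" by auto
  have "Flin n g X (\<lambda>w. c w + d w) = (\<lambda>i j. \<Sum>w\<in>?T. (c w + d w) * Fpath n g X w i j)"
    by (rule Flin_T[OF fT sub])
  also have "\<dots> = (\<lambda>i j. Flin n g X c i j + Flin n g X d i j)"
    using Flin_T[OF fT, of c] Flin_T[OF fT, of d] by (auto simp: distrib_right sum.distrib)
  finally show ?case using add finite_subset[OF sub fT] by simp
next
  case (smult c a)
  let ?T = "{w. c w \<noteq> 0}"
  have fT: "finite ?T" using smult by simp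
  have sub: "{w. a * c w \<noteq> 0} \<subseteq> ?T" by auto
  have "Flin n g X (\<lambda>w. a * c w) = (\<lambda>i j. \<Sum>w\<in>?T. (a * c w) * Fpath n g X w i j)"
    by (rule Flin_T[OF fT sub])
  also have "\<dots> = (\<lambda>i j. a * Flin n g X c i j)"
    using Flin_T[OF fT, of c] by (auto simp: sum_distrib_left mult.assoc)
  finally show ?case using smult finite_subset[OF sub fT] by simp
qed

lemma eqv_F: "eqv n g m X Y (pvec w1 :: qarrow list \<Rightarrow> 'k::field) (pvec w2) \<Longrightarrow>
   (Fpath n g X w1 :: int \<Rightarrow> int \<Rightarrow> 'k) = Fpath n g X w2"
proof (cases "w1 = w2")
  case False
  assume "eqv n g m X Y (pvec w1 :: qarrow list \<Rightarrow> 'k::field) (pvec w2)"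
  then have "Flin n g X (\<lambda>x. (pvec w1 x :: 'k) - pvec w2 x) = (\<lambda>_ _. 0)"
    using ideal_kernel[of X Y "\<lambda>x. (pvec w1 x :: 'k) - pvec w2 x"] unfolding eqv_def by simp
  then show ?thesis unfolding Flin_pvec_diff[OF False] by (auto simp: fun_eq_iff)
qed simp

lemma ideal_F: "in_ideal n g m X Y (pvec w :: qarrow list \<Rightarrow> 'k::field) \<Longrightarrow>
   (Fpath n g X w :: int \<Rightarrow> int \<Rightarrow> 'k) = (\<lambda>_ _. 0)"
  using ideal_kernel[of X Y "pvec w :: qarrow list \<Rightarrow> 'k"] by (simp add: Flin_pvec)

end

definition cpath :: "nat \<Rightarrow> nat \<Rightarrow> nat \<Rightarrow> nat \<Rightarrow> nat \<Rightarrow> nat \<Rightarrow> qarrow list" where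
  "cpath n g r s r' b = pis n g r s b @ rhos (r - b) ((s + b) mod hh n g) (r' + b - r)"

context tube begin

lemma PS_hom:
  assumes a1: "p \<le> p' + N*k" and a2: "p' + N*k \<le> q" and a3: "q \<le> q' + N*k"
    and a4: "int g \<le> q mod N" and a5: "int g \<le> (p' - 1) mod N"
  shows "is_rep_hom n g (p,q) (p',q') (PS N k (p'+N*k) q :: int \<Rightarrow> int \<Rightarrow> 'k::field)"
  unfolding is_rep_hom_def fst_conv snd_conv
proof (intro conjI)
  show "\<forall>i j. (PS N k (p'+N*k) q i j :: 'k) \<noteq> 0 \<longrightarrow> p \<le> i \<and> i \<le> q \<and> p' \<le> j \<and> j \<le> q' \<and> i mod N = j mod N"
  proof (intro allI impI)
    fix i j assume "(PS N k (p'+N*k) q i j :: 'k) \<noteq> 0"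
    then have ij: "j = i - N*k" "p' + N*k \<le> i" "i \<le> q" by (auto simp: PS_def split: if_splits)
    have "(i - N*k) mod N = i mod N" by (simp add: mod_diff_eq[symmetric])
    then show "p \<le> i \<and> i \<le> q \<and> p' \<le> j \<and> j \<le> q' \<and> i mod N = j mod N" using ij a1 a3 by auto
  qed
next
  show "\<forall>x\<in>{0..<g}. \<forall>i. p \<le> i \<and> i \<le> q \<and> i mod N = int x \<longrightarrow>
        up_map p' q' (PS N k (p'+N*k) q i :: int \<Rightarrow> 'k) = (if i < q then PS N k (p'+N*k) q (i+1) else (\<lambda>_. 0))"
  proof (intro ballI allI impI)
    fix x i assume x: "x \<in> {0..<g}" and c: "p \<le> i \<and> i \<le> q \<and> i mod N = int x"
    have iq: "i < q" using c x a4 by (cases "i = q") auto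
    have ip: "i + 1 \<noteq> p' + N*k"
    proof
      assume "i + 1 = p' + N*k"
      then have "i = (p' - 1) + N*k" by simp
      then have "i mod N = (p' - 1) mod N" by simp
      then show False using c x a5 by simp
    qed
    show "up_map p' q' (PS N k (p'+N*k) q i :: int \<Rightarrow> 'k) = (if i < q then PS N k (p'+N*k) q (i+1) else (\<lambda>_. 0))"
      using iq ip a3 c by (auto simp: up_map_def PS_def fun_eq_iff)
  qed
next
  show "\<forall>x\<in>{g..n}. \<forall>i. p \<le> i \<and> i \<le> q \<and> i mod N = int ((x + 1) mod (n + 1)) \<longrightarrow>
        down_map p' q' (PS N k (p'+N*k) q i :: int \<Rightarrow> 'k) = (if p < i then PS N k (p'+N*k) q (i-1) else (\<lambda>_. 0))"
  proof (intro ballI allI impI)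
    fix x i assume c: "p \<le> i \<and> i \<le> q \<and> i mod N = int ((x + 1) mod (n + 1))"
    show "down_map p' q' (PS N k (p'+N*k) q i :: int \<Rightarrow> 'k) = (if p < i then PS N k (p'+N*k) q (i-1) else (\<lambda>_. 0))"
      using a1 a3 c by (auto simp: down_map_def PS_def fun_eq_iff)
  qed
qed

lemma mod_succ: assumes "i mod N = int x" "g \<le> x"
  shows "(i+1) mod N = int ((x+1) mod (n+1))"
proof -
  have "(i+1) mod N = (i mod N + 1) mod N" by (simp add: mod_add_left_eq)
  also have "\<dots> = (int x + 1) mod N" using assms by simp
  also have "\<dots> = int ((x+1) mod (n+1))" by (simp add: of_nat_mod add.commute)
  finally show ?thesis .
qed

lemma hom_supp: "is_rep_hom n g (p,q) (p',q') M \<Longrightarrow> M i j \<noteq> 0 \<Longrightarrow> p \<le> i \<and> i \<le> q \<and> p' \<le> j \<and> j \<le> q'"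
  unfolding is_rep_hom_def by auto

lemma hom_beta: "is_rep_hom n g (p,q) (p',q') M \<Longrightarrow> x < g \<Longrightarrow> p \<le> i \<Longrightarrow> i \<le> q \<Longrightarrow> i mod N = int x \<Longrightarrow>
   up_map p' q' (M i) = (if i < q then M (i+1) else (\<lambda>_. 0))"
  unfolding is_rep_hom_def by auto

lemma hom_alpha: "is_rep_hom n g (p,q) (p',q') M \<Longrightarrow> g \<le> x \<Longrightarrow> x \<le> n \<Longrightarrow> p \<le> i \<Longrightarrow> i \<le> q \<Longrightarrow>
   i mod N = int ((x+1) mod (n+1)) \<Longrightarrow>
   down_map p' q' (M i) = (if p < i then M (i-1) else (\<lambda>_. 0))"
  unfolding is_rep_hom_def by auto

lemma hom_edge:
  assumes hom: "is_rep_hom n g (p,q) (p',q') M" and c: "p \<le> i" "i+1 \<le> q" "p' \<le> i - N*k" "i+1 - N*k \<le> q'"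
  shows "M i (i - N*k) = M (i+1) (i+1 - N*k)"
proof -
  define x where "x = nat (i mod N)"
  have ix: "i mod N = int x" unfolding x_def by simp
  have "i mod N < N" by simp
  then have "int x < int (n+1)" using ix by linarith
  then have xn: "x \<le> n" by simp
  show ?thesis
  proof (cases "x < g")
    case True
    have "up_map p' q' (M i) = M (i+1)" using hom_beta[OF hom True c(1) _ ix] c by simp
    then have "up_map p' q' (M i) (i+1 - N*k) = M (i+1) (i+1 - N*k)" by simp
    then show ?thesis using c by (simp add: up_map_def)
  next
    case False
    have a: "(i+1) mod N = int ((x+1) mod (n+1))" using mod_succ[OF ix] False by simp
    have "down_map p' q' (M (i+1)) = M i"
      using hom_alpha[OF hom _ xn _ _ a] False c by simp
    then have "down_map p' q' (M (i+1)) (i - N*k) = M i (i - N*k)" by simp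
    then have e: "M (i+1) (i - N*k + 1) = M i (i - N*k)" using c by (simp add: down_map_def)
    show ?thesis using e by (simp add: algebra_simps)
  qed
qed

lemma hom_const:
  assumes hom: "is_rep_hom n g (p,q) (p',q') M"
    and lo: "lo = max p (p' + N*k)" and hi: "hi = min q (q' + N*k)"
    and i: "lo \<le> i" "i \<le> hi"
  shows "M i (i - N*k) = M lo (lo - N*k)"
proof -
  have "\<forall>i. lo \<le> i \<and> i \<le> hi \<and> i - lo = int t \<longrightarrow> M i (i - N*k) = M lo (lo - N*k)" for t
  proof (induction t)
    case 0 then show ?case by simp
  next
    case (Suc t)
    show ?case
    proof (intro allI impI)
      fix i assume a: "lo \<le> i \<and> i \<le> hi \<and> i - lo = int (Suc t)"
      then have "M (i-1) (i-1 - N*k) = M lo (lo - N*k)" using Suc.IH by auto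
      moreover have "M (i-1) (i-1 - N*k) = M (i-1+1) (i-1+1 - N*k)"
        by (rule hom_edge[OF hom]) (use a lo hi in auto)
      ultimately show "M i (i - N*k) = M lo (lo - N*k)" by simp
    qed
  qed
  then show ?thesis using i by (metis diff_ge_0_iff_ge nonneg_eq_int)
qed

lemma hom_shift:
  assumes hom: "is_rep_hom n g (p,q) (p',q') (M :: int \<Rightarrow> int \<Rightarrow> 'k::field)"
    and palpha: "\<exists>x\<in>{g..n}. p mod N = int ((x+1) mod (n+1))"
    and qg: "int g \<le> q' mod N"
    and nz: "M i0 (i0 - N*k) \<noteq> 0"
  shows "p \<le> p' + N*k \<and> p' + N*k \<le> q \<and> q \<le> q' + N*k \<and>
    (\<lambda>i j. if j = i - N*k then M i j else 0) = (\<lambda>i j. M i0 (i0 - N*k) * PS N k (p'+N*k) q i j)"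
proof -
  define lo where "lo = max p (p' + N*k)"
  define hi where "hi = min q (q' + N*k)"
  have s0: "p \<le> i0 \<and> i0 \<le> q \<and> p' \<le> i0 - N*k \<and> i0 - N*k \<le> q'" using hom_supp[OF hom nz] .
  have i0: "lo \<le> i0" "i0 \<le> hi" using s0 unfolding lo_def hi_def by auto
  have const: "M i (i - N*k) = M i0 (i0 - N*k)" if "lo \<le> i" "i \<le> hi" for i
    using hom_const[OF hom lo_def hi_def that] hom_const[OF hom lo_def hi_def i0] by simp
  have c1: "p \<le> p' + N*k"
  proof (rule ccontr)
    assume "\<not> p \<le> p' + N*k"
    then have plo: "lo = p" and pg: "p' + N*k < p" unfolding lo_def by auto
    have "M p (p - N*k) \<noteq> 0" using const[of p] plo i0 nz by simp
    then have sp: "p - N*k \<le> q'" using hom_supp[OF hom] by blast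
    obtain x where x: "x \<in> {g..n}" "p mod N = int ((x+1) mod (n+1))" using palpha by blast
    have "down_map p' q' (M p) = (\<lambda>_. 0)" using hom_alpha[OF hom _ _ _ _ x(2)] x(1) s0 by auto
    then have "down_map p' q' (M p) (p - N*k - 1) = 0" by simp
    then have "M p (p - N*k) = 0" using pg sp by (simp add: down_map_def)
    then show False using \<open>M p (p - N*k) \<noteq> 0\<close> by simp
  qed
  have c2: "q \<le> q' + N*k"
  proof (rule ccontr)
    assume "\<not> q \<le> q' + N*k"
    then have qhi: "hi = q' + N*k" and qg2: "q' + N*k < q" unfolding hi_def by auto
    define i where "i = q' + N*k"
    have Mi: "M i (i - N*k) \<noteq> 0" using const[of i] qhi i0 nz unfolding i_def by simp
    define x where "x = nat (i mod N)"
    have iq: "i mod N = q' mod N" unfolding i_def by simp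
    have ix: "i mod N = int x" unfolding x_def by simp
    have xg: "g \<le> x" using iq ix qg by simp
    have "i mod N < N" by simp
    then have "int x < int (n+1)" using ix by linarith
    then have xn: "x \<le> n" by simp
    have "down_map p' q' (M (i+1)) = M i"
      using hom_alpha[OF hom xg xn _ _ mod_succ[OF ix xg]] i0 qhi qg2 s0 unfolding i_def lo_def by auto
    then have "down_map p' q' (M (i+1)) q' = M i q'" by simp
    then have "M i q' = 0" by (simp add: down_map_def)
    then show False using Mi unfolding i_def by simp
  qed
  have c3: "p' + N*k \<le> q" using s0 by simp
  have "(\<lambda>i j. if j = i - N*k then M i j else 0) = (\<lambda>i j. M i0 (i0 - N*k) * PS N k (p'+N*k) q i j)"
  proof (intro ext)
    fix i j
    show "(if j = i - N*k then M i j else 0) = M i0 (i0 - N*k) * PS N k (p'+N*k) q i j"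
    proof (cases "j = i - N*k")
      case True
      show ?thesis
      proof (cases "p' + N*k \<le> i \<and> i \<le> q")
        case True
        then have "lo \<le> i" "i \<le> hi" using c1 c2 unfolding lo_def hi_def by auto
        then show ?thesis using const \<open>j = i - N*k\<close> True by (simp add: PS_def)
      next
        case False
        have "M i (i - N*k) = 0"
        proof (rule ccontr)
          assume "M i (i - N*k) \<noteq> 0"
          then have "p \<le> i \<and> i \<le> q \<and> p' \<le> i - N*k \<and> i - N*k \<le> q'" by (rule hom_supp[OF hom])
          then show False using False by auto
        qed
        then show ?thesis using False \<open>j = i - N*k\<close> by (auto simp: PS_def)
      qed
    next
      case False
      then show ?thesis by (simp add: PS_def)
    qed
  qed
  then show ?thesis using c1 c2 c3 by simp
qed

lemma length_pis: "length (pis n g r s b) = b" by (induction b arbitrary: r s) auto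
lemma length_rhos: "length (rhos r s a) = a" by (induction a arbitrary: r) auto

lemma cpath_facts:
  assumes q1: "in_Q n g m (r,s)" and q2: "in_Q n g m (r',s')" and b: "b \<le> r" "(s+b) mod h = s'" "r \<le> r' + b"
  shows "is_path n g m (r,s) (r',s') (cpath n g r s r' b) \<and>
    (Fpath n g (r,s) (cpath n g r s r' b) :: int \<Rightarrow> int \<Rightarrow> 'k::field) = PS N (int ((s+b) div h)) (phi n g (s+b)) (QQ n g (r+s))"
proof -
  have s: "s < h" using q1 by (simp add: in_Q_def)
  have e: "r - b + (r' + b - r) = r'" using b by simp
  have q2': "in_Q n g m (r - b + (r' + b - r), (s+b) mod h)" using q2 e b by simp
  have p1: "is_path n g m (r,s) (r - b, (s+b) mod h) (pis n g r s b)" using pis_path[OF q1 b(1)] .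
  have p2: "is_path n g m (r - b, (s+b) mod h) (r - b + (r' + b - r), (s+b) mod h) (rhos (r-b) ((s+b) mod h) (r' + b - r))"
    by (rule rhos_path[OF q2'])
  have "is_path n g m (r,s) (r',s') (cpath n g r s r' b)"
    unfolding cpath_def using p1 p2 e b(2) is_path_append by fastforce
  moreover have "(Fpath n g (r,s) (cpath n g r s r' b) :: int \<Rightarrow> int \<Rightarrow> 'k) = PS N (int ((s+b) div h)) (phi n g (s+b)) (QQ n g (r+s))"
    unfolding cpath_def by (rule Fpath_canon[OF s b(1) q1 q2'])
  ultimately show ?thesis by simp
qed

lemma cpath_len: "r \<le> r' + b \<Longrightarrow> length (cpath n g r s r' b) = 2*b + r' - r"
  unfolding cpath_def by (simp add: length_pis length_rhos)

lemma cpath_inj: assumes "r \<le> r' + b" "r \<le> r' + b'" "cpath n g r s r' b = cpath n g r s r' b'" shows "b = b'"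
proof -
  have "2*b + r' - r = 2*b' + r' - r" using cpath_len[OF assms(1), of s] cpath_len[OF assms(2), of s] assms(3) by simp
  then show ?thesis using assms(1,2) by arith
qed

lemma QQ_modg: "int g \<le> QQ n g t mod N" using QQ_mod[of t] by simp

lemma pp_pred_mod: "s' < h \<Longrightarrow> int g \<le> (pp g s' - 1) mod N"
proof (cases "s' = 0")
  case True
  have "(-1 :: int) mod N = N - 1" by (rule zmod_minus1) simp
  then show ?thesis using True gn by (simp add: pp_def)
next
  case False
  assume "s' < h"
  then have "g + s' - 1 < n + 1" using g_h by simp
  then have "int g + int s' - 1 < N" by linarith
  moreover have "0 \<le> int g + int s' - 1" using g1 by simp
  ultimately show ?thesis using False by (simp add: pp_def mod_pos_pos_trivial)
qed

lemma pp_alpha: assumes "s < h" shows "\<exists>x\<in>{g..n}. pp g s mod N = int ((x+1) mod (n+1))"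
proof (cases "s = 0")
  case True
  then show ?thesis using gn by (intro bexI[of _ n]) (auto simp: pp_def)
next
  case False
  have le: "g + s \<le> n" using assms g_h by simp
  then have "int g + int s < N" by linarith
  then have "pp g s mod N = int (g + s)" using False by (simp add: pp_def mod_pos_pos_trivial)
  moreover have "(g + s - 1 + 1) mod (n + 1) = g + s" using le False by simp
  ultimately show ?thesis using le False g1 by (intro bexI[of _ "g + s - 1"]) auto
qed

lemma canon_hom:
  assumes q1: "in_Q n g m (r,s)" and q2: "in_Q n g m (r',s')" and b: "b \<le> r" "(s+b) mod h = s'" "r \<le> r' + b"
  shows "is_rep_hom n g (Fobj n g (r,s)) (Fobj n g (r',s')) (PS N (int ((s+b) div h)) (phi n g (s+b)) (QQ n g (r+s)) :: int \<Rightarrow> int \<Rightarrow> 'k::field)"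
proof -
  let ?k = "(s+b) div h"
  have s: "s < h" and s': "s' < h" using q1 q2 by (auto simp: in_Q_def)
  have ph: "phi n g (s+b) = pp g s' + N * int ?k" using b(2) by (simp add: phi_def)
  have a1: "pp g s \<le> pp g s' + N * int ?k" using phi_mono[of s "s+b"] phi_small[OF s] ph by simp
  have a2: "pp g s' + N * int ?k \<le> QQ n g (r+s)" using phi_le_QQ_iff[of "s+b" "r+s"] ph b by simp
  have "r' + s' + h * ?k = r' + (s + b)" using b(2) by (metis add.assoc mod_div_mult_eq mult.commute)
  then have "QQ n g (r' + s') + N * int ?k = QQ n g (r' + (s + b))" using QQ_shift[of "r'+s'" ?k] by metis
  moreover have "QQ n g (r+s) \<le> QQ n g (r' + (s + b))" using QQ_mono b by simp
  ultimately have a3: "QQ n g (r+s) \<le> QQ n g (r'+s') + N * int ?k" by simp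
  have "is_rep_hom n g (pp g s, QQ n g (r+s)) (pp g s', QQ n g (r'+s')) (PS N (int ?k) (pp g s' + N * int ?k) (QQ n g (r+s)) :: int \<Rightarrow> int \<Rightarrow> 'k)"
    by (rule PS_hom[OF a1 a2 a3 QQ_modg pp_pred_mod[OF s']])
  then show ?thesis using ph by (simp add: Fobj_eq)
qed

lemma k_to_b:
  assumes s: "s < h" and s': "s' < h" and c1: "pp g s \<le> pp g s' + N*k" and c2: "pp g s' + N*k \<le> QQ n g (r+s)"
    and c3: "QQ n g (r+s) \<le> QQ n g (r'+s') + N*k"
  shows "\<exists>b. b \<le> r \<and> (s+b) mod h = s' \<and> r \<le> r' + b \<and> int ((s+b) div h) = k \<and> phi n g (s+b) = pp g s' + N*k"
proof -
  have "0 \<le> pp g s" by (rule pp_ge0)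
  moreover have "pp g s' < N" using pp_ltN[OF s'] .
  ultimately have "- N < N * k" using c1 by linarith
  then have "-1 < k" using mult_less_cancel_left_pos[of N "-1" k] by simp
  then have "0 \<le> k" by simp
  then obtain kn where kn: "k = int kn" using nonneg_eq_int by blast
  define t where "t = h * kn + s'"
  have pt: "phi n g t = pp g s' + N * k" unfolding t_def using phi_decomp[OF s'] kn by simp
  have "phi n g s \<le> phi n g t" using c1 pt phi_small[OF s] by simp
  then have st: "s \<le> t" using phi_le_iff by simp
  define b where "b = t - s"
  have sb: "s + b = t" using st b_def by simp
  have "phi n g t \<le> QQ n g (r+s)" using c2 pt by simp
  then have "t \<le> r + s" by (simp add: phi_le_QQ_iff)
  then have b1: "b \<le> r" using sb by simp
  have tm: "t mod h = s'" "t div h = kn" using s' h_pos unfolding t_def by auto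
  have "QQ n g (r'+s') + N * k = QQ n g (r' + s' + h * kn)" using QQ_shift kn by simp
  then have "r + s \<le> r' + s' + h * kn" using c3 QQ_le_iff by simp
  then have b3: "r \<le> r' + b" using sb unfolding t_def by simp
  show ?thesis using b1 b3 sb tm kn pt by (intro exI[of _ b]) simp
qed

lemma path_hom: assumes "is_path n g m (r,s) (r',s') w"
  shows "is_rep_hom n g (Fobj n g (r,s)) (Fobj n g (r',s')) (Fpath n g (r,s) w :: int \<Rightarrow> int \<Rightarrow> 'k::field)"
proof -
  have q1: "in_Q n g m (r,s)" and q2: "in_Q n g m (r',s')" using assms is_path_src is_path_tgt by blast+
  from nf[OF assms] show ?thesis
  proof
    assume "in_ideal n g m (r,s) (r',s') (pvec w :: qarrow list \<Rightarrow> 'k)"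
    then have "(Fpath n g (r,s) w :: int \<Rightarrow> int \<Rightarrow> 'k) = (\<lambda>_ _. 0)" by (rule ideal_F)
    then show ?thesis by (simp add: hom_zero)
  next
    assume "\<exists>b a. b \<le> r \<and> (r',s') = (r - b + a, (s + b) mod h) \<and>
       eqv n g m (r,s) (r',s') (pvec w :: qarrow list \<Rightarrow> 'k) (pvec (pis n g r s b @ rhos (r - b) ((s + b) mod h) a))"
    then obtain b a where b: "b \<le> r" "(r',s') = (r - b + a, (s + b) mod h)"
      and e: "eqv n g m (r,s) (r',s') (pvec w :: qarrow list \<Rightarrow> 'k) (pvec (pis n g r s b @ rhos (r - b) ((s + b) mod h) a))"
      by blast
    have a: "a = r' + b - r" "(s+b) mod h = s'" "r \<le> r' + b" using b by auto
    have "(Fpath n g (r,s) w :: int \<Rightarrow> int \<Rightarrow> 'k) = Fpath n g (r,s) (cpath n g r s r' b)"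
      using eqv_F[OF e] a unfolding cpath_def by simp
    also have "\<dots> = PS N (int ((s+b) div h)) (phi n g (s+b)) (QQ n g (r+s))"
      by (rule conjunct2[OF cpath_facts[OF q1 q2 b(1) a(2,3)]])
    finally show ?thesis using canon_hom[OF q1 q2 b(1) a(2,3)] by simp
  qed
qed

lemma image_sub:
  assumes c: "c \<in> (kQ n g m (r,s) (r',s') :: (qarrow list \<Rightarrow> 'k::field) set)"
  shows "Flin n g (r,s) c \<in> HomK n g (Fobj n g (r,s)) (Fobj n g (r',s'))"
proof -
  have fS: "finite {w. c w \<noteq> 0}" and pS: "\<And>w. c w \<noteq> 0 \<Longrightarrow> is_path n g m (r,s) (r',s') w"
    using c unfolding kQ_def by auto
  have "is_rep_hom n g (Fobj n g (r,s)) (Fobj n g (r',s')) (\<lambda>i j. \<Sum>w\<in>{w. c w \<noteq> 0}. c w * (Fpath n g (r,s) w i j :: 'k))"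
    by (rule hom_sum[OF fS]) (use pS path_hom in blast)
  then show ?thesis unfolding HomK_def Flin_def by simp
qed

lemma hom_decomp:
  assumes hom: "is_rep_hom n g (p,q) (p',q') (M :: int \<Rightarrow> int \<Rightarrow> 'k::field)"
  defines "Bd \<equiv> \<bar>p\<bar> + \<bar>q\<bar> + \<bar>p'\<bar> + \<bar>q'\<bar>"
  shows "M = (\<lambda>i j. \<Sum>k\<in>{-Bd..Bd}. if j = i - N*k then M i j else 0)"
proof (intro ext)
  fix i j
  show "M i j = (\<Sum>k\<in>{-Bd..Bd}. if j = i - N*k then M i j else 0)"
  proof (cases "M i j = 0")
    case True
    have "(if j = i - N*k then M i j else 0) = 0" for k by (simp only: True if_cancel)
    then show ?thesis using True by simp
  next
    case False
    have sup: "p \<le> i \<and> i \<le> q \<and> p' \<le> j \<and> j \<le> q' \<and> i mod N = j mod N"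
      using hom False unfolding is_rep_hom_def by auto
    define k0 where "k0 = (i - j) div N"
    have "(i - j) mod N = 0" using sup by (simp add: mod_diff_eq[symmetric])
    then have ij: "i - j = N * k0" unfolding k0_def by (metis mult_div_mod_eq add.right_neutral)
    have "1 * \<bar>k0\<bar> \<le> N * \<bar>k0\<bar>" by (rule mult_right_mono) simp_all
    then have "\<bar>k0\<bar> \<le> \<bar>N * k0\<bar>" by (simp add: abs_mult)
    also have "\<dots> \<le> Bd" using ij sup unfolding Bd_def by linarith
    finally have k0B: "k0 \<in> {-Bd..Bd}" by auto
    have iff: "(j = i - N*k) = (k = k0)" for k
    proof
      assume "j = i - N*k" then have "N*k = N*k0" using ij by simp
      then show "k = k0" by simp
    qed (use ij in simp)
    have "(\<Sum>k\<in>{-Bd..Bd}. if j = i - N*k then M i j else 0) = (\<Sum>k\<in>{-Bd..Bd}. if k = k0 then M i j else 0)"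
      using iff by simp
    also have "\<dots> = M i j" using k0B by (simp add: sum.delta)
    finally show ?thesis by simp
  qed
qed

lemma hom_sub:
  assumes q1: "in_Q n g m (r,s)" and q2: "in_Q n g m (r',s')"
    and M: "M \<in> HomK n g (Fobj n g (r,s)) (Fobj n g (r',s'))"
  shows "M \<in> Flin n g (r,s) ` (kQ n g m (r,s) (r',s') :: (qarrow list \<Rightarrow> 'k::field) set)"
proof -
  have s: "s < h" and s': "s' < h" using q1 q2 by (auto simp: in_Q_def)
  let ?p = "pp g s" and ?q = "QQ n g (r+s)" and ?p' = "pp g s'" and ?q' = "QQ n g (r'+s')"
  have hom: "is_rep_hom n g (?p, ?q) (?p', ?q') (M :: int \<Rightarrow> int \<Rightarrow> 'k)" using M by (simp add: HomK_def Fobj_eq)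
  define Bd where "Bd = \<bar>?p\<bar> + \<bar>?q\<bar> + \<bar>?p'\<bar> + \<bar>?q'\<bar>"
  define K where "K = {-Bd..Bd}"
  define Mk where "Mk = (\<lambda>k i j. if j = i - N*k then M i j else (0::'k))"
  have dec: "M = (\<lambda>i j. \<Sum>k\<in>K. Mk k i j)" unfolding K_def Mk_def Bd_def by (rule hom_decomp[OF hom])
  define K' where "K' = {k\<in>K. \<exists>i. M i (i - N*k) \<noteq> 0}"
  define i0 where "i0 = (\<lambda>k. SOME i. M i (i - N*k) \<noteq> 0)"
  define cf where "cf = (\<lambda>k. M (i0 k) (i0 k - N*k))"
  have Bk: "\<exists>b. b \<le> r \<and> (s+b) mod h = s' \<and> r \<le> r' + b \<and> int ((s+b) div h) = k \<and> phi n g (s+b) = ?p' + N*k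
            \<and> Mk k = (\<lambda>i j. cf k * PS N k (?p' + N*k) ?q i j)" if k: "k \<in> K'" for k
  proof -
    have "\<exists>i. M i (i - N*k) \<noteq> 0" using k unfolding K'_def by blast
    then have nz: "M (i0 k) (i0 k - N*k) \<noteq> 0" unfolding i0_def by (rule someI_ex)
    have hs: "?p \<le> ?p' + N*k \<and> ?p' + N*k \<le> ?q \<and> ?q \<le> ?q' + N*k \<and>
      (\<lambda>i j. if j = i - N*k then M i j else 0) = (\<lambda>i j. M (i0 k) (i0 k - N*k) * PS N k (?p'+N*k) ?q i j)"
      by (rule hom_shift[OF hom pp_alpha[OF s] QQ_modg nz])
    obtain b where b: "b \<le> r" "(s+b) mod h = s'" "r \<le> r' + b" "int ((s+b) div h) = k" "phi n g (s+b) = ?p' + N*k"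
      using k_to_b[OF s s', of k r r'] hs by blast
    show ?thesis using b hs unfolding Mk_def cf_def by (intro exI[of _ b]) auto
  qed
  define bk where "bk = (\<lambda>k. SOME b. b \<le> r \<and> (s+b) mod h = s' \<and> r \<le> r' + b \<and> int ((s+b) div h) = k \<and> phi n g (s+b) = ?p' + N*k
            \<and> Mk k = (\<lambda>i j. cf k * PS N k (?p' + N*k) ?q i j))"
  have bkP: "bk k \<le> r \<and> (s + bk k) mod h = s' \<and> r \<le> r' + bk k \<and> int ((s + bk k) div h) = k \<and> phi n g (s + bk k) = ?p' + N*k
            \<and> Mk k = (\<lambda>i j. cf k * PS N k (?p' + N*k) ?q i j)" if "k \<in> K'" for k
    unfolding bk_def by (rule someI_ex[OF Bk[OF that]])
  define P where "P = (\<lambda>k. cpath n g r s r' (bk k))"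
  have PF: "is_path n g m (r,s) (r',s') (P k) \<and> Mk k = (\<lambda>i j. cf k * (Fpath n g (r,s) (P k) i j :: 'k))" if "k \<in> K'" for k
  proof -
    have f: "is_path n g m (r,s) (r',s') (P k) \<and> (Fpath n g (r,s) (P k) :: int \<Rightarrow> int \<Rightarrow> 'k) = PS N (int ((s + bk k) div h)) (phi n g (s + bk k)) ?q"
      unfolding P_def using bkP[OF that] by (intro cpath_facts[OF q1 q2]) auto
    then show ?thesis using bkP[OF that] by simp
  qed
  have fK: "finite K" unfolding K_def by simp
  have fK': "finite K'" using fK unfolding K'_def by simp
  define c' where "c' = (\<lambda>w. \<Sum>k\<in>K'. cf k * (pvec (P k) w :: 'k))"
  define T where "T = P ` K'"
  have fT: "finite T" unfolding T_def using fK' by simp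
  have supp: "{w. c' w \<noteq> 0} \<subseteq> T"
  proof
    fix w assume "w \<in> {w. c' w \<noteq> 0}"
    then obtain k where "k \<in> K'" "pvec (P k) w \<noteq> (0::'k)" unfolding c'_def by (metis (mono_tags, lifting) mem_Collect_eq mult_zero_right sum.neutral)
    then show "w \<in> T" unfolding T_def by (auto simp: pvec_def split: if_splits)
  qed
  have c'Q: "c' \<in> kQ n g m (r,s) (r',s')"
    unfolding kQ_def using finite_subset[OF supp fT] supp PF unfolding T_def by blast
  have "Flin n g (r,s) c' = (\<lambda>i j. \<Sum>w\<in>T. c' w * Fpath n g (r,s) w i j)" by (rule Flin_T[OF fT supp])
  also have "\<dots> = (\<lambda>i j. \<Sum>k\<in>K'. cf k * Fpath n g (r,s) (P k) i j)"
  proof (intro ext)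
    fix i j
    have "(\<Sum>w\<in>T. c' w * Fpath n g (r,s) w i j) = (\<Sum>w\<in>T. \<Sum>k\<in>K'. cf k * ((pvec (P k) w :: 'k) * Fpath n g (r,s) w i j))"
      unfolding c'_def by (simp add: sum_distrib_right mult.assoc)
    also have "\<dots> = (\<Sum>k\<in>K'. cf k * (\<Sum>w\<in>T. (pvec (P k) w :: 'k) * Fpath n g (r,s) w i j))"
      by (subst sum.swap) (simp add: sum_distrib_left)
    also have "\<dots> = (\<Sum>k\<in>K'. cf k * Fpath n g (r,s) (P k) i j)"
    proof (rule sum.cong[OF refl])
      fix k assume "k \<in> K'"
      then have "P k \<in> T" unfolding T_def by simp
      then have "(\<Sum>w\<in>T. (pvec (P k) w :: 'k) * Fpath n g (r,s) w i j) = (\<Sum>w\<in>T. if w = P k then Fpath n g (r,s) w i j else 0)"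
        by (intro sum.cong) (auto simp: pvec_def)
      also have "\<dots> = Fpath n g (r,s) (P k) i j" using \<open>P k \<in> T\<close> fT by (subst sum.delta) simp_all
      finally show "cf k * (\<Sum>w\<in>T. (pvec (P k) w :: 'k) * Fpath n g (r,s) w i j) = cf k * Fpath n g (r,s) (P k) i j" by simp
    qed
    finally show "(\<Sum>w\<in>T. c' w * Fpath n g (r,s) w i j) = (\<Sum>k\<in>K'. cf k * Fpath n g (r,s) (P k) i j)" .
  qed
  also have "\<dots> = (\<lambda>i j. \<Sum>k\<in>K'. Mk k i j)" using PF by (intro ext sum.cong) auto
  also have "\<dots> = (\<lambda>i j. \<Sum>k\<in>K. Mk k i j)"
  proof (intro ext)
    fix i j
    show "(\<Sum>k\<in>K'. Mk k i j) = (\<Sum>k\<in>K. Mk k i j)"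
    proof (rule sum.mono_neutral_left[OF fK])
      show "K' \<subseteq> K" unfolding K'_def by auto
      show "\<forall>k\<in>K - K'. Mk k i j = 0"
      proof
        fix k assume "k \<in> K - K'"
        then have "M i (i - N*k) = 0" unfolding K'_def by auto
        then show "Mk k i j = 0" unfolding Mk_def by auto
      qed
    qed
  qed
  also have "\<dots> = M" using dec by simp
  finally show ?thesis using c'Q by (metis image_eqI)
qed

lemma kernel_sub:
  assumes q1: "in_Q n g m (r,s)" and q2: "in_Q n g m (r',s')"
    and c: "c \<in> (kQ n g m (r,s) (r',s') :: (qarrow list \<Rightarrow> 'k::field) set)"
    and z: "Flin n g (r,s) c = (\<lambda>_ _. 0)"
  shows "in_ideal n g m (r,s) (r',s') c"
proof -
  define S where "S = {w. c w \<noteq> 0}"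
  have fS: "finite S" and pS: "\<And>w. w \<in> S \<Longrightarrow> is_path n g m (r,s) (r',s') w"
    using c unfolding kQ_def S_def by auto
  define Bset where "Bset = {b. b \<le> r \<and> (s+b) mod h = s' \<and> r \<le> r' + b}"
  let ?E = "\<lambda>w b. b \<in> Bset \<and> eqv n g m (r,s) (r',s') (pvec w :: qarrow list \<Rightarrow> 'k) (pvec (cpath n g r s r' b))"
  have nfS: "in_ideal n g m (r,s) (r',s') (pvec w :: qarrow list \<Rightarrow> 'k) \<or> (\<exists>b. ?E w b)" if "w \<in> S" for w
  proof -
    from nf[OF pS[OF that]] show ?thesis
    proof
      assume "\<exists>b a. b \<le> r \<and> (r',s') = (r - b + a, (s + b) mod h) \<and>
         eqv n g m (r,s) (r',s') (pvec w :: qarrow list \<Rightarrow> 'k) (pvec (pis n g r s b @ rhos (r - b) ((s + b) mod h) a))"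
      then obtain b a where b: "b \<le> r" "(r',s') = (r - b + a, (s + b) mod h)"
        and e: "eqv n g m (r,s) (r',s') (pvec w :: qarrow list \<Rightarrow> 'k) (pvec (pis n g r s b @ rhos (r - b) ((s + b) mod h) a))"
        by blast
      have "a = r' + b - r" "b \<in> Bset" using b unfolding Bset_def by auto
      then have "?E w b" using e unfolding cpath_def by simp
      then show ?thesis by blast
    qed simp
  qed
  define beta where "beta = (\<lambda>w. if in_ideal n g m (r,s) (r',s') (pvec w :: qarrow list \<Rightarrow> 'k) then None else Some (SOME b. ?E w b))"
  have betaN: "in_ideal n g m (r,s) (r',s') (pvec w :: qarrow list \<Rightarrow> 'k)" if "beta w = None" for w
    using that unfolding beta_def by (auto split: if_splits)
  have betaS: "?E w b" if "w \<in> S" "beta w = Some b" for w b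
  proof -
    have "\<not> in_ideal n g m (r,s) (r',s') (pvec w :: qarrow list \<Rightarrow> 'k)" and bb: "b = (SOME b. ?E w b)"
      using that unfolding beta_def by (auto split: if_splits)
    then have "\<exists>b. ?E w b" using nfS[OF that(1)] by blast
    then show ?thesis unfolding bb by (rule someI_ex)
  qed
  define cp where "cp = (\<lambda>w. case beta w of None \<Rightarrow> (\<lambda>_. 0) | Some b \<Rightarrow> (pvec (cpath n g r s r' b) :: qarrow list \<Rightarrow> 'k))"
  define G where "G = (\<lambda>b. PS N (int ((s+b) div h)) (phi n g (s+b)) (QQ n g (r+s)) :: int \<Rightarrow> int \<Rightarrow> 'k)"
  have FG: "(Fpath n g (r,s) w :: int \<Rightarrow> int \<Rightarrow> 'k) = (case beta w of None \<Rightarrow> (\<lambda>_ _. 0) | Some b \<Rightarrow> G b)" if "w \<in> S" for w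
  proof (cases "beta w")
    case None then show ?thesis using ideal_F[OF betaN[OF None]] by simp
  next
    case (Some b)
    have E: "?E w b" using betaS[OF that Some] .
    then have "(Fpath n g (r,s) w :: int \<Rightarrow> int \<Rightarrow> 'k) = Fpath n g (r,s) (cpath n g r s r' b)" using eqv_F by blast
    also have "\<dots> = G b" unfolding G_def using E unfolding Bset_def
      by (intro conjunct2[OF cpath_facts[OF q1 q2]]) auto
    finally show ?thesis using Some by simp
  qed
  have zsum: "(\<Sum>w\<in>S. c w * Fpath n g (r,s) w i j) = 0" for i j
    using z unfolding Flin_def S_def by (metis (no_types, lifting))
  have key: "(\<Sum>w\<in>S. c w * cp w x) = 0" for x
  proof (cases "\<exists>b0\<in>Bset. x = cpath n g r s r' b0")
    case True
    then obtain b0 where b0: "b0 \<in> Bset" "x = cpath n g r s r' b0" by blast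
    define i0 where "i0 = phi n g (s+b0)"
    define j0 where "j0 = i0 - N * int ((s+b0) div h)"
    have tm: "cp w x = Fpath n g (r,s) w i0 j0" if "w \<in> S" for w
    proof (cases "beta w")
      case None then show ?thesis unfolding cp_def using FG[OF that] by simp
    next
      case (Some b)
      have bB: "b \<in> Bset" using betaS[OF that Some] by simp
      have ii: "(cpath n g r s r' b0 = cpath n g r s r' b) = (b = b0)"
        using cpath_inj[of r r' b0 b s] bB b0(1) unfolding Bset_def by auto
      have "cp w x = (if b = b0 then 1 else 0)"
        unfolding cp_def using Some b0(2) ii by (simp add: pvec_def)
      moreover have "(Fpath n g (r,s) w i0 j0 :: 'k) = (if b = b0 then 1 else 0)"
      proof -
        have i0q: "i0 \<le> QQ n g (r+s)" unfolding i0_def using b0 phi_le_QQ_iff unfolding Bset_def by auto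
        have "G b i0 j0 = (if b = b0 then 1 else 0)"
        proof (cases "b = b0")
          case True then show ?thesis unfolding G_def PS_def i0_def j0_def using i0q i0_def by simp
        next
          case False
          have "(s+b) mod h = (s+b0) mod h" using bB b0 unfolding Bset_def by simp
          then have "(s+b) div h \<noteq> (s+b0) div h" using False by (metis div_mod_decomp add_left_cancel)
          then have "j0 \<noteq> i0 - N * int ((s+b) div h)" unfolding j0_def by simp
          then show ?thesis using False unfolding G_def PS_def by simp
        qed
        then show ?thesis using FG[OF that] Some by simp
      qed
      ultimately show ?thesis by simp
    qed
    have "(\<Sum>w\<in>S. c w * cp w x) = (\<Sum>w\<in>S. c w * Fpath n g (r,s) w i0 j0)" using tm by simp
    then show ?thesis using zsum by simp
  next
    case False
    have "cp w x = 0" if "w \<in> S" for w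
    proof (cases "beta w")
      case None then show ?thesis unfolding cp_def by simp
    next
      case (Some b)
      have "b \<in> Bset" using betaS[OF that Some] by simp
      then show ?thesis using False Some unfolding cp_def pvec_def by auto
    qed
    then show ?thesis by simp
  qed
  define d where "d = (\<lambda>x. \<Sum>w\<in>S. c w * (pvec w x - cp w x))"
  have dI: "in_ideal n g m (r,s) (r',s') d"
    unfolding d_def
  proof (rule I_sum[OF fS])
    fix w assume w: "w \<in> S"
    have "in_ideal n g m (r,s) (r',s') (\<lambda>x. pvec w x - cp w x)"
    proof (cases "beta w")
      case None
      then show ?thesis using betaN[OF None] unfolding cp_def by simp
    next
      case (Some b)
      then show ?thesis using betaS[OF w Some] unfolding cp_def eqv_def by simp
    qed
    then show "in_ideal n g m (r,s) (r',s') (\<lambda>x. c w * (pvec w x - cp w x))" by (rule in_ideal.smult)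
  qed
  have "c = d"
  proof
    fix x
    have "d x = (\<Sum>w\<in>S. c w * pvec w x) - (\<Sum>w\<in>S. c w * cp w x)"
      unfolding d_def by (simp add: right_diff_distrib sum_subtractf)
    also have "(\<Sum>w\<in>S. c w * pvec w x) = (\<Sum>w\<in>S. if w = x then c w else 0)"
      by (intro sum.cong) (auto simp: pvec_def)
    also have "\<dots> = c x" using fS by (subst sum.delta) (auto simp: S_def)
    finally show "c x = d x" using key by simp
  qed
  then show ?thesis using dI by simp
qed


lemma pp_inj: "pp g s1 = pp g s2 \<Longrightarrow> s1 = s2"
  using pp_lt[of s1 s2] pp_lt[of s2 s1] by (metis less_irrefl linorder_neq_iff)

lemma main_XY:
  assumes q1: "in_Q n g m (r,s)" and q2: "in_Q n g m (r',s')"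
  shows "Flin n g (r,s) ` (kQ n g m (r,s) (r',s') :: (qarrow list \<Rightarrow> 'k::field) set) = HomK n g (Fobj n g (r,s)) (Fobj n g (r',s'))
        \<and> (\<forall>c \<in> (kQ n g m (r,s) (r',s') :: (qarrow list \<Rightarrow> 'k) set).
              Flin n g (r,s) c = (\<lambda>_ _. 0) \<longleftrightarrow> in_ideal n g m (r,s) (r',s') c)"
proof (intro conjI ballI)
  show "Flin n g (r,s) ` (kQ n g m (r,s) (r',s') :: (qarrow list \<Rightarrow> 'k::field) set) = HomK n g (Fobj n g (r,s)) (Fobj n g (r',s'))"
  proof
    show "Flin n g (r,s) ` (kQ n g m (r,s) (r',s') :: (qarrow list \<Rightarrow> 'k::field) set) \<subseteq> HomK n g (Fobj n g (r,s)) (Fobj n g (r',s'))"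
      using image_sub by blast
    show "HomK n g (Fobj n g (r,s)) (Fobj n g (r',s')) \<subseteq> Flin n g (r,s) ` (kQ n g m (r,s) (r',s') :: (qarrow list \<Rightarrow> 'k::field) set)"
      using hom_sub[OF q1 q2] by blast
  qed
next
  fix c assume c: "c \<in> (kQ n g m (r,s) (r',s') :: (qarrow list \<Rightarrow> 'k) set)"
  show "Flin n g (r,s) c = (\<lambda>_ _. 0) \<longleftrightarrow> in_ideal n g m (r,s) (r',s') c"
    using kernel_sub[OF q1 q2 c] ideal_kernel[of "(r,s)" "(r',s')" c] by blast
qed

end

theorem mainTheorem3:
  fixes n g m :: nat
  assumes alg_closed: "\<forall>p :: 'k::field poly. degree p > 0 \<longrightarrow> (\<exists>x. poly p x = 0)"
    and "1 \<le> n" and "1 \<le> g" and "g \<le> n"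
  shows "inj_on (Fobj n g) {X. in_Q n g m X}
    \<and> (\<forall>X Y. in_Q n g m X \<longrightarrow> in_Q n g m Y \<longrightarrow>
          Flin n g X ` (kQ n g m X Y :: (qarrow list \<Rightarrow> 'k) set) = HomK n g (Fobj n g X) (Fobj n g Y)
        \<and> (\<forall>c \<in> (kQ n g m X Y :: (qarrow list \<Rightarrow> 'k) set).
              Flin n g X c = (\<lambda>_ _. 0) \<longleftrightarrow> in_ideal n g m X Y c))"
proof -
  interpret tube n g m by unfold_locales (use assms in auto)
  have inj: "inj_on (Fobj n g) {X. in_Q n g m X}"
  proof (rule inj_onI)
    fix X Y assume X: "X \<in> {X. in_Q n g m X}" and Y: "Y \<in> {X. in_Q n g m X}" and e: "Fobj n g X = Fobj n g Y"
    obtain r s where Xe: "X = (r,s)" by (cases X)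
    obtain r2 s2 where Ye: "Y = (r2,s2)" by (cases Y)
    have "pp g s = pp g s2" "QQ n g (r+s) = QQ n g (r2+s2)" using e Xe Ye by (auto simp: Fobj_eq)
    then have "s = s2" "r + s = r2 + s2" using pp_inj QQ_eq_iff by auto
    then show "X = Y" using Xe Ye by simp
  qed
  have "\<forall>X Y. in_Q n g m X \<longrightarrow> in_Q n g m Y \<longrightarrow>
          Flin n g X ` (kQ n g m X Y :: (qarrow list \<Rightarrow> 'k) set) = HomK n g (Fobj n g X) (Fobj n g Y)
        \<and> (\<forall>c \<in> (kQ n g m X Y :: (qarrow list \<Rightarrow> 'k) set).
              Flin n g X c = (\<lambda>_ _. 0) \<longleftrightarrow> in_ideal n g m X Y c)"
  proof (intro allI impI)
    fix X Y assume qX: "in_Q n g m X" and qY: "in_Q n g m Y"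
    obtain r s where Xe: "X = (r,s)" by (cases X)
    obtain r2 s2 where Ye: "Y = (r2,s2)" by (cases Y)
    show "Flin n g X ` (kQ n g m X Y :: (qarrow list \<Rightarrow> 'k) set) = HomK n g (Fobj n g X) (Fobj n g Y)
        \<and> (\<forall>c \<in> (kQ n g m X Y :: (qarrow list \<Rightarrow> 'k) set).
              Flin n g X c = (\<lambda>_ _. 0) \<longleftrightarrow> in_ideal n g m X Y c)"
      using main_XY[of r s r2 s2] qX qY Xe Ye by simp
  qed
  with inj show ?thesis by blast
qed

end
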